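(* Let $r\ge1$ and $m\in\{0,1,\dots,5\}$, and let $A=6r^2+2mr+(m-2)\mathbb 1_{\{m>0\}}$. Then every polyiamond of area $A$ whose edge-perimeter is minimal among polyiamonds of area $A$ is a quasi-regular hexagon.
   Context: Faces are the closed triangular faces of the triangular lattice $\mathbb T^2$ in $\mathbb R^2$. A polyiamond $P$ is a finite nonempty union of faces that is connected through shared edges (two faces sharing only a vertex are not adjacent); faces not in $P$ are empty faces. Its area $\|P\|$ is the number of its faces; its edge-perimeter $p(P)$ is the number of edges of $\mathbb T^2$ separating a face of $P$ from an empty face; its site-perimeter $s(P)$ is the number of empty faces sharing at least one edge with a face of $P$. For integers $d\ge1$, $a,b,c\ge0$ with $a+b,b+c,c+a\le d$, $T^d_{a,b,c}$ is the polyiamond obtained from an equilateral triangle of side length $d$ with sides on lattice lines (the union of its $d^2$ faces) by removing the equilateral sub-triangles of side lengths $a,b,c$ at its three corners; its boundary is a (possibly degenerate) hexagon with side lengths, in cyclic order, $a,\ d-a-b,\ b,\ d-b-c,\ c,\ d-c-a$, its area is $d^2-a^2-b^2-c^2$ and its edge- and site-perimeter equal $3d-a-b-c$. Quasi-regular hexagons: for $r\ge1$ let $E(r)=T^{3r}_{r,r,r}$ (regular hexagon of side $r$), $E_{B_1}(r)=T^{3r}_{r-1,r,r}$, $E_{B_2}(r)=T^{3r+1}_{r,r,r+1}$, $E_{B_3}(r)=T^{3r+1}_{r,r,r}$, $E_{B_4}(r)=T^{3r+2}_{r,r+1,r+1}$, $E_{B_5}(r)=T^{3r+2}_{r,r,r+1}$.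 Their areas are $6r^2,\ 6r^2+2r-1,\ 6r^2+4r,\ 6r^2+6r+1,\ 6r^2+8r+2,\ 6r^2+10r+3$, and their edge-perimeters are $6r,6r+1,\dots,6r+5$. A quasi-regular hexagon is any image of one of these under a symmetry (translation, rotation, reflection) of $\mathbb T^2$; $\mathcal Q$ denotes the set of all quasi-regular hexagons. *)

theory Defs
  imports Main
begin

text \<open>Lattice points of the triangular lattice are written in the basis
  e1 = (1,0), e2 = (1/2, sqrt 3 / 2): the pair (a,b) denotes a*e1 + b*e2.\<close>

type_synonym pt = "int \<times> int"
type_synonym face = "pt set"

definition up_face :: "int \<Rightarrow> int \<Rightarrow> face" where
  "up_face a b = {(a,b), (a+1,b), (a,b+1)}"

definition down_face :: "int \<Rightarrow> int \<Rightarrow> face" where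
  "down_face a b = {(a+1,b), (a,b+1), (a+1,b+1)}"

definition is_face :: "face \<Rightarrow> bool" where
  "is_face F \<longleftrightarrow> (\<exists>a b. F = up_face a b \<or> F = down_face a b)"

text \<open>Two faces are adjacent iff they share an edge, i.e. exactly two vertices.\<close>
definition adjacent :: "face \<Rightarrow> face \<Rightarrow> bool" where
  "adjacent F G \<longleftrightarrow> is_face F \<and> is_face G \<and> card (F \<inter> G) = 2"

definition polyiamond :: "face set \<Rightarrow> bool" where
  "polyiamond P \<longleftrightarrow> finite P \<and> P \<noteq> {} \<and> (\<forall>F\<in>P. is_face F) \<and>
     (\<forall>F\<in>P. \<forall>G\<in>P. (F, G) \<in> {(X, Y). X \<in> P \<and> Y \<in> P \<and> adjacent X Y}\<^sup>*)"

definition area :: "face set \<Rightarrow> nat" where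
  "area P = card P"

definition edge_perimeter :: "face set \<Rightarrow> nat" where
  "edge_perimeter P = card {F \<inter> G | F G. F \<in> P \<and> G \<notin> P \<and> adjacent F G}"

text \<open>Squared Euclidean distance between lattice points.\<close>
definition sqdist :: "pt \<Rightarrow> pt \<Rightarrow> int" where
  "sqdist p q = (let a = fst p - fst q; b = snd p - snd q in a*a + a*b + b*b)"

definition lattice_symmetry :: "(pt \<Rightarrow> pt) \<Rightarrow> bool" where
  "lattice_symmetry g \<longleftrightarrow> bij g \<and> (\<forall>p q. sqdist (g p) (g q) = sqdist p q)"

text \<open>T^d_{a,b,c}: triangle with vertices (0,0), (d,0), (0,d), with corner triangles of side
  a at (0,0), b at (d,0), c at (0,d) removed.\<close>
definition T :: "int \<Rightarrow> int \<Rightarrow> int \<Rightarrow> int \<Rightarrow> face set" where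
  "T d a b c =
     {up_face x y | x y. 0 \<le> x \<and> 0 \<le> y \<and> x \<le> d - b - 1 \<and> y \<le> d - c - 1 \<and>
                         a \<le> x + y \<and> x + y \<le> d - 1} \<union>
     {down_face x y | x y. 0 \<le> x \<and> 0 \<le> y \<and> x \<le> d - b - 1 \<and> y \<le> d - c - 1 \<and>
                         a - 1 \<le> x + y \<and> x + y \<le> d - 2}"

definition E0 :: "nat \<Rightarrow> face set" where "E0 r = T (3*int r) (int r) (int r) (int r)"
definition EB1 :: "nat \<Rightarrow> face set" where "EB1 r = T (3*int r) (int r - 1) (int r) (int r)"
definition EB2 :: "nat \<Rightarrow> face set" where "EB2 r = T (3*int r + 1) (int r) (int r) (int r + 1)"
definition EB3 :: "nat \<Rightarrow> face set" where "EB3 r = T (3*int r + 1) (int r) (int r) (int r)"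
definition EB4 :: "nat \<Rightarrow> face set" where "EB4 r = T (3*int r + 2) (int r) (int r + 1) (int r + 1)"
definition EB5 :: "nat \<Rightarrow> face set" where "EB5 r = T (3*int r + 2) (int r) (int r) (int r + 1)"

definition quasi_regular :: "face set \<Rightarrow> bool" where
  "quasi_regular P \<longleftrightarrow> (\<exists>r\<ge>1. \<exists>g. lattice_symmetry g \<and>
      (\<exists>H \<in> {E0 r, EB1 r, EB2 r, EB3 r, EB4 r, EB5 r}. P = (\<lambda>F. g ` F) ` H))"

end

theory Submission
  imports Defs
begin

lemma fin_up[simp]: "finite (up_face a b)" and fin_down[simp]: "finite (down_face a b)"
  by (simp_all add: up_face_def down_face_def)

lemma card_up_down_le1:
  assumes "\<not> ((c = a \<and> d = b) \<or> (c = a-1 \<and> d = b) \<or> (c = a \<and> d = b-1))"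
  shows "card (up_face a b \<inter> down_face c d) \<le> 1"
proof -
  have "\<forall>x\<in>up_face a b \<inter> down_face c d. \<forall>y\<in>up_face a b \<inter> down_face c d. x = y"
    using assms unfolding up_face_def down_face_def by auto
  then show ?thesis by (simp add: card_le_Suc0_iff_eq)
qed

lemma card_up_up_le1:
  assumes "\<not> (c = a \<and> d = b)"
  shows "card (up_face a b \<inter> up_face c d) \<le> 1"
proof -
  have "\<forall>x\<in>up_face a b \<inter> up_face c d. \<forall>y\<in>up_face a b \<inter> up_face c d. x = y"
    using assms unfolding up_face_def by auto
  then show ?thesis by (simp add: card_le_Suc0_iff_eq)
qed

lemma card_down_down_le1:
  assumes "\<not> (c = a \<and> d = b)"
  shows "card (down_face a b \<inter> down_face c d) \<le> 1"
proof -
  have "\<forall>x\<in>down_face a b \<inter> down_face c d. \<forall>y\<in>down_face a b \<inter> down_face c d. x = y"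
    using assms unfolding down_face_def by auto
  then show ?thesis by (simp add: card_le_Suc0_iff_eq)
qed

lemma card_up3: "card (up_face a b) = 3" by (simp add: up_face_def)
lemma card_down3: "card (down_face a b) = 3" by (simp add: down_face_def)

lemma ud1: "up_face a b \<inter> down_face a b = {(a+1,b),(a,b+1)}"
  unfolding up_face_def down_face_def by auto
lemma ud2: "up_face a b \<inter> down_face (a-1) b = {(a,b),(a,b+1)}"
  unfolding up_face_def down_face_def by auto
lemma ud3: "up_face a b \<inter> down_face a (b-1) = {(a,b),(a+1,b)}"
  unfolding up_face_def down_face_def by auto

lemma up_inj[simp]: "up_face a b = up_face c d \<longleftrightarrow> a = c \<and> b = d"
proof
  assume h: "up_face a b = up_face c d"
  have 1: "(a,b) \<in> up_face a b" "(c,d) \<in> up_face c d" by (simp_all add: up_face_def)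
  have "(a,b) \<in> up_face c d" "(c,d) \<in> up_face a b" using 1 h by simp_all
  then show "a = c \<and> b = d" unfolding up_face_def by simp linarith
qed simp

lemma down_inj[simp]: "down_face a b = down_face c d \<longleftrightarrow> a = c \<and> b = d"
proof
  assume h: "down_face a b = down_face c d"
  have 1: "(a+1,b+1) \<in> down_face a b" "(c+1,d+1) \<in> down_face c d" by (simp_all add: down_face_def)
  have "(a+1,b+1) \<in> down_face c d" "(c+1,d+1) \<in> down_face a b" using 1 h by simp_all
  then show "a = c \<and> b = d" unfolding down_face_def by simp linarith
qed simp

lemma up_ne_down[simp]: "up_face a b \<noteq> down_face c d" "down_face c d \<noteq> up_face a b"
proof -
  show "up_face a b \<noteq> down_face c d"
  proof
    assume h: "up_face a b = down_face c d"
    have 1: "(a,b) \<in> up_face a b" "(a+1,b) \<in> up_face a b" "(a,b+1) \<in> up_face a b"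
      by (simp_all add: up_face_def)
    have "(a,b) \<in> down_face c d" "(a+1,b) \<in> down_face c d" "(a,b+1) \<in> down_face c d"
      using 1 h by simp_all
    then show False unfolding down_face_def by auto
  qed
  then show "down_face c d \<noteq> up_face a b" by metis
qed

lemma is_face_up[simp]: "is_face (up_face a b)" and is_face_down[simp]: "is_face (down_face a b)"
  unfolding is_face_def by blast+

lemma adj_up: "adjacent (up_face a b) G \<longleftrightarrow> G = down_face a b \<or> G = down_face (a-1) b \<or> G = down_face a (b-1)"
proof
  assume h: "adjacent (up_face a b) G"
  then obtain c d where G: "G = up_face c d \<or> G = down_face c d" unfolding adjacent_def is_face_def by blast
  have c2: "card (up_face a b \<inter> G) = 2" using h unfolding adjacent_def by simp
  show "G = down_face a b \<or> G = down_face (a-1) b \<or> G = down_face a (b-1)"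
  proof (cases "G = up_face c d")
    case True
    then show ?thesis using c2 card_up_up_le1[where a=a and b=b and c=c and d=d] card_up3[of a b]
      by (cases "c = a \<and> d = b") auto
  next
    case False
    then have G': "G = down_face c d" using G by blast
    then show ?thesis using c2 card_up_down_le1[where a=a and b=b and c=c and d=d] by fastforce
  qed
next
  assume "G = down_face a b \<or> G = down_face (a-1) b \<or> G = down_face a (b-1)"
  then show "adjacent (up_face a b) G" unfolding adjacent_def using ud1 ud2 ud3 by auto
qed

lemma adjacent_sym: "adjacent F G \<longleftrightarrow> adjacent G F"
  unfolding adjacent_def by (auto simp: Int_commute)

lemma adj_down: "adjacent (down_face a b) G \<longleftrightarrow> G = up_face a b \<or> G = up_face (a+1) b \<or> G = up_face a (b+1)"
proof
  assume h: "adjacent (down_face a b) G"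
  then obtain c d where G: "G = up_face c d \<or> G = down_face c d" unfolding adjacent_def is_face_def by blast
  have c2: "card (down_face a b \<inter> G) = 2" using h unfolding adjacent_def by simp
  show "G = up_face a b \<or> G = up_face (a+1) b \<or> G = up_face a (b+1)"
  proof (cases "G = down_face c d")
    case True
    then show ?thesis using c2 card_down_down_le1[where a=a and b=b and c=c and d=d] card_down3[of a b]
      by (cases "c = a \<and> d = b") auto
  next
    case False
    then have G': "G = up_face c d" using G by blast
    have "card (up_face c d \<inter> down_face a b) = 2" using c2 G' by (simp add: Int_commute)
    then have "(a = c \<and> b = d) \<or> (a = c-1 \<and> b = d) \<or> (a = c \<and> b = d-1)"
      using card_up_down_le1[where a=c and b=d and c=a and d=b] by fastforce
    then show ?thesis using G' by auto
  qed
next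
  assume "G = up_face a b \<or> G = up_face (a+1) b \<or> G = up_face a (b+1)"
  then have "adjacent G (down_face a b)" by (auto simp: adj_up)
  then show "adjacent (down_face a b) G" using adjacent_sym by blast
qed

definition ci :: "face \<Rightarrow> int" where "ci F = Min (fst ` F)"
definition cj :: "face \<Rightarrow> int" where "cj F = Min (snd ` F)"
definition ck :: "face \<Rightarrow> int" where "ck F = Min ((\<lambda>p. fst p + snd p) ` F)"

lemma coords_up[simp]: "ci (up_face a b) = a" "cj (up_face a b) = b" "ck (up_face a b) = a + b"
  unfolding ci_def cj_def ck_def up_face_def by (simp_all add: min_def)

lemma coords_down[simp]: "ci (down_face a b) = a" "cj (down_face a b) = b" "ck (down_face a b) = a + b + 1"
  unfolding ci_def cj_def ck_def down_face_def by (simp_all add: min_def)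

definition fI :: "int \<Rightarrow> int \<Rightarrow> face" where
  "fI t p = (if even p then up_face t (p div 2) else down_face t (p div 2))"
definition fJ :: "int \<Rightarrow> int \<Rightarrow> face" where
  "fJ t p = (if even p then up_face (p div 2) t else down_face (p div 2) t)"
definition fK :: "int \<Rightarrow> int \<Rightarrow> face" where
  "fK t p = (if even p then up_face (p div 2) (t - p div 2) else down_face (p div 2) (t - p div 2 - 1))"

definition posI :: "face \<Rightarrow> int" where "posI F = cj F + ck F - ci F"
definition posJ :: "face \<Rightarrow> int" where "posJ F = ci F + ck F - cj F"
definition posK :: "face \<Rightarrow> int" where "posK F = ci F - cj F + ck F"

lemma face_cases: "is_face F \<Longrightarrow> (\<And>a b. F = up_face a b \<Longrightarrow> P) \<Longrightarrow> (\<And>a b. F = down_face a b \<Longrightarrow> P) \<Longrightarrow> P"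
  unfolding is_face_def by blast

lemma fI_rec: "is_face F \<Longrightarrow> F = fI (ci F) (posI F)"
  by (erule face_cases) (auto simp: fI_def posI_def)
lemma fJ_rec: "is_face F \<Longrightarrow> F = fJ (cj F) (posJ F)"
  by (erule face_cases) (auto simp: fJ_def posJ_def)
lemma fK_rec: "is_face F \<Longrightarrow> F = fK (ck F) (posK F)"
  by (erule face_cases) (auto simp: fK_def posK_def)

lemma even_odd_cases: fixes p :: int obtains q where "p = 2*q" | q where "p = 2*q+1"
  by (metis oddE evenE)

lemma fI_inj: "fI t p = fI t p' \<Longrightarrow> p = p'"
  by (cases p rule: even_odd_cases; cases p' rule: even_odd_cases) (auto simp: fI_def)
lemma fJ_inj: "fJ t p = fJ t p' \<Longrightarrow> p = p'"
  by (cases p rule: even_odd_cases; cases p' rule: even_odd_cases) (auto simp: fJ_def)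
lemma fK_inj: "fK t p = fK t p' \<Longrightarrow> p = p'"
  by (cases p rule: even_odd_cases; cases p' rule: even_odd_cases) (auto simp: fK_def)

lemma fI_adj: "adjacent (fI t p) (fI t (p+1))"
  by (cases p rule: even_odd_cases) (auto simp: fI_def adj_up adj_down)
lemma fJ_adj: "adjacent (fJ t p) (fJ t (p+1))"
  by (cases p rule: even_odd_cases) (auto simp: fJ_def adj_up adj_down)
lemma fK_adj: "adjacent (fK t p) (fK t (p+1))"
  by (cases p rule: even_odd_cases) (auto simp: fK_def adj_up adj_down)

definition hor :: "int \<Rightarrow> int \<Rightarrow> pt set" where "hor x y = {(x,y),(x+1,y)}"
definition ver :: "int \<Rightarrow> int \<Rightarrow> pt set" where "ver x y = {(x,y),(x,y+1)}"
definition ant :: "int \<Rightarrow> int \<Rightarrow> pt set" where "ant x y = {(x+1,y),(x,y+1)}"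

lemma edge_eqs[simp]:
  "hor x y = hor x' y' \<longleftrightarrow> x = x' \<and> y = y'"
  "ver x y = ver x' y' \<longleftrightarrow> x = x' \<and> y = y'"
  "ant x y = ant x' y' \<longleftrightarrow> x = x' \<and> y = y'"
  "hor x y \<noteq> ver x' y'" "hor x y \<noteq> ant x' y'" "ver x y \<noteq> ant x' y'"
  "ver x y \<noteq> hor x' y'" "ant x y \<noteq> hor x' y'" "ant x y \<noteq> ver x' y'"
  unfolding hor_def ver_def ant_def by (auto simp: doubleton_eq_iff)

definition eI where "eI t p = fI t p \<inter> fI t (p+1)"
definition eJ where "eJ t p = fJ t p \<inter> fJ t (p+1)"
definition eK where "eK t p = fK t p \<inter> fK t (p+1)"

lemma eI_even: "eI t (2*q) = ant t q" and eI_odd: "eI t (2*q+1) = hor t (q+1)"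
  unfolding eI_def fI_def ant_def hor_def up_face_def down_face_def by auto
lemma eJ_even: "eJ t (2*q) = ant q t" and eJ_odd: "eJ t (2*q+1) = ver (q+1) t"
  unfolding eJ_def fJ_def ant_def ver_def up_face_def down_face_def by auto
lemma eK_even: "eK t (2*q) = hor q (t-q)" and eK_odd: "eK t (2*q+1) = ver (q+1) (t-q-1)"
  unfolding eK_def fK_def hor_def ver_def up_face_def down_face_def by auto

definition Bd :: "face set \<Rightarrow> pt set set" where
  "Bd P = {F \<inter> G | F G. F \<in> P \<and> G \<notin> P \<and> adjacent F G}"

lemma ep_Bd: "edge_perimeter P = card (Bd P)"
  unfolding edge_perimeter_def Bd_def by simp

lemma finite_Bd: assumes "finite P" "\<forall>F\<in>P. finite F" shows "finite (Bd P)"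
proof -
  have "Bd P \<subseteq> Pow (\<Union>P)" unfolding Bd_def by auto
  moreover have "finite (Pow (\<Union>P))" using assms by simp
  ultimately show ?thesis by (rule finite_subset)
qed

lemma rows_bound:
  fixes f :: "int \<Rightarrow> int \<Rightarrow> face" and c pos :: "face \<Rightarrow> int"
  assumes fin: "finite P" and finF: "\<forall>F\<in>P. finite F"
    and rec: "\<forall>H\<in>P. H = f (c H) (pos H)"
    and adj: "\<forall>t p. adjacent (f t p) (f t (p+1))"
    and finj: "\<forall>t p p'. f t p = f t p' \<longrightarrow> p = p'"
    and einj: "\<forall>t p t' p'. f t p \<inter> f t (p+1) = f t' p' \<inter> f t' (p'+1) \<longrightarrow> t = t' \<and> p = p'"
    and occ: "\<forall>t\<in>{lo..hi}. \<exists>H\<in>P. c H = t"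
  shows "2 * card {lo..hi} \<le> card (Bd P \<inter> {f t p \<inter> f t (p+1) | t p. True})"
proof -
  define S where "S t = f t -` P" for t
  have Sfin: "finite (S t)" for t
    unfolding S_def by (rule finite_vimageI[OF fin]) (meson finj injI)
  have Sne: "S t \<noteq> {}" if "t \<in> {lo..hi}" for t
  proof -
    from bspec[OF occ that] obtain H where H: "H \<in> P" "c H = t" by (elim bexE)
    have "H = f (c H) (pos H)" using rec H(1) by blast
    then have "f t (pos H) \<in> P" using H by simp
    then show ?thesis unfolding S_def by (simp add: vimage_def) blast
  qed
  define e where "e t p = f t p \<inter> f t (p+1)" for t p
  define g where "g t b = (if b then Max (S t) else Min (S t) - 1)" for t b
  define \<phi> where "\<phi> x = e (fst x) (g (fst x) (snd x))" for x
  have inj: "inj_on \<phi> ({lo..hi} \<times> UNIV)"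
  proof (rule inj_onI)
    fix x y assume x: "x \<in> {lo..hi} \<times> UNIV" and y: "y \<in> {lo..hi} \<times> UNIV" and eq: "\<phi> x = \<phi> y"
    obtain t b where xt: "x = (t,b)" by force
    obtain t' b' where yt: "y = (t',b')" by force
    have "e t (g t b) = e t' (g t' b')" using eq unfolding \<phi>_def xt yt by simp
    then have tt: "t = t'" and gg: "g t b = g t b'" using einj unfolding e_def by blast+
    have mm: "Min (S t) \<le> Max (S t)" using Sne[of t] Sfin[of t] x xt by simp
    have "b = b'" using gg mm unfolding g_def by (cases b; cases b') auto
    then show "x = y" using xt yt tt by simp
  qed
  have sub: "\<phi> ` ({lo..hi} \<times> UNIV) \<subseteq> Bd P \<inter> {f t p \<inter> f t (p+1) | t p. True}"
  proof
    fix z assume "z \<in> \<phi> ` ({lo..hi} \<times> UNIV)"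
    then obtain t b where tb: "t \<in> {lo..hi}" "z = \<phi> (t,b)" by blast
    have ne: "S t \<noteq> {}" and fs: "finite (S t)" using Sne tb Sfin by auto
    show "z \<in> Bd P \<inter> {f t p \<inter> f t (p+1) | t p. True}"
    proof (cases b)
      case True
      define p where "p = Max (S t)"
      have "p \<in> S t" unfolding p_def using ne fs by simp
      then have inP: "f t p \<in> P" unfolding S_def by simp
      have "p + 1 \<notin> S t" unfolding p_def using ne fs Max_ge[OF fs, of "Max (S t) + 1"] by auto
      then have notP: "f t (p+1) \<notin> P" unfolding S_def by simp
      have "z = e t p" using tb True unfolding \<phi>_def g_def p_def by simp
      then show ?thesis using inP notP adj unfolding Bd_def e_def by blast
    next
      case False
      define p where "p = Min (S t) - 1"
      have "p + 1 \<in> S t" unfolding p_def using ne fs by simp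
      then have inP: "f t (p+1) \<in> P" unfolding S_def by simp
      have "p \<notin> S t" unfolding p_def using ne fs Min_le[OF fs, of "Min (S t) - 1"] by auto
      then have notP: "f t p \<notin> P" unfolding S_def by simp
      have "z = e t p" using tb False unfolding \<phi>_def g_def p_def by simp
      then have "z = f t (p+1) \<inter> f t p" unfolding e_def by blast
      moreover have "adjacent (f t (p+1)) (f t p)" using adj adjacent_sym by blast
      ultimately show ?thesis using inP notP unfolding Bd_def e_def by blast
    qed
  qed
  have "finite (Bd P)" using finite_Bd fin finF by blast
  then have "card (\<phi> ` ({lo..hi} \<times> UNIV)) \<le> card (Bd P \<inter> {f t p \<inter> f t (p+1) | t p. True})"
    using sub by (intro card_mono) auto
  moreover have "card (\<phi> ` ({lo..hi} \<times> UNIV)) = 2 * card {lo..hi}"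
    using card_image[OF inj] by (simp add: card_cartesian_product)
  ultimately show ?thesis by simp
qed


lemma adj_coords: "adjacent F G \<Longrightarrow> \<bar>ci F - ci G\<bar> \<le> 1 \<and> \<bar>cj F - cj G\<bar> \<le> 1 \<and> \<bar>ck F - ck G\<bar> \<le> 1"
proof -
  assume h: "adjacent F G"
  then have "is_face F" unfolding adjacent_def by simp
  then show ?thesis
  proof (rule face_cases)
    fix a b assume "F = up_face a b" then show ?thesis using h by (auto simp: adj_up)
  next
    fix a b assume "F = down_face a b" then show ?thesis using h by (auto simp: adj_down)
  qed
qed

lemma interval_occ:
  fixes c :: "face \<Rightarrow> int"
  assumes P: "polyiamond P" and lip: "\<And>X Y. adjacent X Y \<Longrightarrow> \<bar>c X - c Y\<bar> \<le> 1"
    and F: "F \<in> P" and G: "G \<in> P"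
  shows "\<forall>t. min (c F) (c G) \<le> t \<and> t \<le> max (c F) (c G) \<longrightarrow> (\<exists>H\<in>P. c H = t)"
proof -
  have "(F, G) \<in> {(X, Y). X \<in> P \<and> Y \<in> P \<and> adjacent X Y}\<^sup>*" using P F G unfolding polyiamond_def by blast
  then show ?thesis
  proof (induction rule: rtrancl_induct)
    case base
    then show ?case using F by auto
  next
    case (step y z)
    then have yz: "y \<in> P" "z \<in> P" "\<bar>c y - c z\<bar> \<le> 1" using lip by auto
    show ?case
    proof (intro allI impI)
      fix t assume t: "min (c F) (c z) \<le> t \<and> t \<le> max (c F) (c z)"
      show "\<exists>H\<in>P. c H = t"
      proof (cases "t = c z")
        case True then show ?thesis using yz by blast
      next
        case False
        then have "min (c F) (c y) \<le> t \<and> t \<le> max (c F) (c y)" using t yz(3) by auto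
        then show ?thesis using step.IH by blast
      qed
    qed
  qed
qed

lemma occ_all:
  fixes c :: "face \<Rightarrow> int"
  assumes P: "polyiamond P" and lip: "\<And>X Y. adjacent X Y \<Longrightarrow> \<bar>c X - c Y\<bar> \<le> 1"
  shows "\<forall>t\<in>{Min (c ` P)..Max (c ` P)}. \<exists>H\<in>P. c H = t"
proof
  fix t assume t: "t \<in> {Min (c ` P)..Max (c ` P)}"
  have fin: "finite (c ` P)" and ne: "c ` P \<noteq> {}" using P unfolding polyiamond_def by auto
  obtain F where F: "F \<in> P" "c F = Min (c ` P)" using Min_in[OF fin ne] by auto
  obtain G where G: "G \<in> P" "c G = Max (c ` P)" using Max_in[OF fin ne] by auto
  show "\<exists>H\<in>P. c H = t" using interval_occ[OF P lip F(1) G(1)] t F G by auto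
qed

definition ANT where "ANT = {ant x y | x y. True}"
definition HOR where "HOR = {hor x y | x y. True}"
definition VER where "VER = {ver x y | x y. True}"

lemma eI_cls: "eI t p \<in> ANT \<union> HOR"
  by (cases p rule: even_odd_cases) (auto simp: eI_even eI_odd ANT_def HOR_def)
lemma eJ_cls: "eJ t p \<in> ANT \<union> VER"
  by (cases p rule: even_odd_cases) (auto simp: eJ_even eJ_odd ANT_def VER_def)
lemma eK_cls: "eK t p \<in> HOR \<union> VER"
  by (cases p rule: even_odd_cases) (auto simp: eK_even eK_odd HOR_def VER_def)

lemma eI_inj: "eI t p = eI t' p' \<Longrightarrow> t = t' \<and> p = p'"
  by (cases p rule: even_odd_cases; cases p' rule: even_odd_cases) (auto simp: eI_even eI_odd)
lemma eJ_inj: "eJ t p = eJ t' p' \<Longrightarrow> t = t' \<and> p = p'"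
  by (cases p rule: even_odd_cases; cases p' rule: even_odd_cases) (auto simp: eJ_even eJ_odd)
lemma eK_inj: "eK t p = eK t' p' \<Longrightarrow> t = t' \<and> p = p'"
  by (cases p rule: even_odd_cases; cases p' rule: even_odd_cases) (auto simp: eK_even eK_odd)

lemma cls_disj: "ANT \<inter> HOR = {}" "ANT \<inter> VER = {}" "HOR \<inter> VER = {}"
  unfolding ANT_def HOR_def VER_def by auto

lemma poly_faces: "polyiamond P \<Longrightarrow> F \<in> P \<Longrightarrow> is_face F"
  unfolding polyiamond_def by blast

lemma face_finite: "is_face F \<Longrightarrow> finite F"
  by (erule face_cases) auto

theorem perim_lower:
  assumes P: "polyiamond P"
  shows "card {Min (ci ` P)..Max (ci ` P)} + card {Min (cj ` P)..Max (cj ` P)} + card {Min (ck ` P)..Max (ck ` P)}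
         \<le> edge_perimeter P"
proof -
  have fin: "finite P" using P unfolding polyiamond_def by simp
  have finF: "\<forall>F\<in>P. finite F" using P poly_faces face_finite by blast
  have finB: "finite (Bd P)" using finite_Bd fin finF by blast
  have occI: "\<forall>t\<in>{Min (ci ` P)..Max (ci ` P)}. \<exists>H\<in>P. ci H = t" by (rule occ_all[OF P]) (use adj_coords in blast)
  have occJ: "\<forall>t\<in>{Min (cj ` P)..Max (cj ` P)}. \<exists>H\<in>P. cj H = t" by (rule occ_all[OF P]) (use adj_coords in blast)
  have occK: "\<forall>t\<in>{Min (ck ` P)..Max (ck ` P)}. \<exists>H\<in>P. ck H = t" by (rule occ_all[OF P]) (use adj_coords in blast)
  have I: "2 * card {Min (ci ` P)..Max (ci ` P)} \<le> card (Bd P \<inter> {fI t p \<inter> fI t (p+1) | t p. True})"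
    apply (rule rows_bound[OF fin finF _ _ _ _ occI, where pos = posI])
    using P poly_faces fI_rec fI_adj fI_inj eI_inj unfolding eI_def by blast+
  have J: "2 * card {Min (cj ` P)..Max (cj ` P)} \<le> card (Bd P \<inter> {fJ t p \<inter> fJ t (p+1) | t p. True})"
    apply (rule rows_bound[OF fin finF _ _ _ _ occJ, where pos = posJ])
    using P poly_faces fJ_rec fJ_adj fJ_inj eJ_inj unfolding eJ_def by blast+
  have K: "2 * card {Min (ck ` P)..Max (ck ` P)} \<le> card (Bd P \<inter> {fK t p \<inter> fK t (p+1) | t p. True})"
    apply (rule rows_bound[OF fin finF _ _ _ _ occK, where pos = posK])
    using P poly_faces fK_rec fK_adj fK_inj eK_inj unfolding eK_def by blast+
  have sI: "Bd P \<inter> {fI t p \<inter> fI t (p+1) | t p. True} \<subseteq> (Bd P \<inter> ANT) \<union> (Bd P \<inter> HOR)"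
    using eI_cls unfolding eI_def by blast
  have sJ: "Bd P \<inter> {fJ t p \<inter> fJ t (p+1) | t p. True} \<subseteq> (Bd P \<inter> ANT) \<union> (Bd P \<inter> VER)"
    using eJ_cls unfolding eJ_def by blast
  have sK: "Bd P \<inter> {fK t p \<inter> fK t (p+1) | t p. True} \<subseteq> (Bd P \<inter> HOR) \<union> (Bd P \<inter> VER)"
    using eK_cls unfolding eK_def by blast
  have cU: "card (X \<union> Y) \<le> card X + card Y" for X Y :: "pt set set" by (rule card_Un_le)
  have "card (Bd P \<inter> {fI t p \<inter> fI t (p+1) | t p. True}) \<le> card (Bd P \<inter> ANT) + card (Bd P \<inter> HOR)"
    by (rule order_trans[OF card_mono[OF _ sI] cU]) (use finB in simp)
  moreover have "card (Bd P \<inter> {fJ t p \<inter> fJ t (p+1) | t p. True}) \<le> card (Bd P \<inter> ANT) + card (Bd P \<inter> VER)"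
    by (rule order_trans[OF card_mono[OF _ sJ] cU]) (use finB in simp)
  moreover have "card (Bd P \<inter> {fK t p \<inter> fK t (p+1) | t p. True}) \<le> card (Bd P \<inter> HOR) + card (Bd P \<inter> VER)"
    by (rule order_trans[OF card_mono[OF _ sK] cU]) (use finB in simp)
  moreover have "card (Bd P \<inter> ANT) + card (Bd P \<inter> HOR) + card (Bd P \<inter> VER) \<le> card (Bd P)"
  proof -
    have "card (Bd P \<inter> ANT) + card (Bd P \<inter> HOR) = card ((Bd P \<inter> ANT) \<union> (Bd P \<inter> HOR))"
      using cls_disj finB by (intro card_Un_disjoint[symmetric]) auto
    moreover have "card ((Bd P \<inter> ANT) \<union> (Bd P \<inter> HOR)) + card (Bd P \<inter> VER) = card ((Bd P \<inter> ANT) \<union> (Bd P \<inter> HOR) \<union> (Bd P \<inter> VER))"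
      using cls_disj finB by (intro card_Un_disjoint[symmetric]) auto
    moreover have "card ((Bd P \<inter> ANT) \<union> (Bd P \<inter> HOR) \<union> (Bd P \<inter> VER)) \<le> card (Bd P)"
      using finB by (intro card_mono) auto
    ultimately show ?thesis by linarith
  qed
  ultimately show ?thesis using I J K unfolding ep_Bd by linarith
qed

definition tri :: "int \<Rightarrow> pt set" where "tri n = {(x,y). 0 \<le> x \<and> 0 \<le> y \<and> x + y \<le> n - 1}"

lemma tri_nat: "2 * card (tri (int k)) = k * (k + 1)"
proof (induction k)
  case 0
  have "tri 0 = {}" unfolding tri_def by auto
  then show ?case by simp
next
  case (Suc k)
  define D where "D = (\<lambda>x. (x, int k - x)) ` {0..int k}"
  have eq: "tri (int (Suc k)) = tri (int k) \<union> D"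
    unfolding tri_def D_def by (auto simp: image_iff) 
  have disj: "tri (int k) \<inter> D = {}" unfolding tri_def D_def by auto
  have finT: "finite (tri (int k))"
  proof -
    have "tri (int k) \<subseteq> {0..int k} \<times> {0..int k}" unfolding tri_def by auto
    then show ?thesis by (rule finite_subset) simp
  qed
  have cD: "card D = Suc k" unfolding D_def by (subst card_image) (auto simp: inj_on_def)
  have "card (tri (int (Suc k))) = card (tri (int k)) + card D"
    unfolding eq by (rule card_Un_disjoint[OF finT _ disj]) (simp add: D_def)
  then show ?case using Suc cD by simp
qed

lemma tri_card: "n \<ge> -1 \<Longrightarrow> 2 * int (card (tri n)) = n * (n + 1)"
proof (cases "n \<ge> 0")
  case True
  then obtain k where k: "n = int k" by (metis nonneg_eq_int)
  show ?thesis using tri_nat[of k] unfolding k by (metis of_nat_add of_nat_mult of_nat_1 of_nat_numeral)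
next
  case False
  assume "n \<ge> -1"
  then have "n = -1" using False by simp
  moreover have "tri (-1) = {}" unfolding tri_def by auto
  ultimately show ?thesis by simp
qed

lemma tri_finite: "finite (tri n)"
proof -
  have "tri n \<subseteq> {0..\<bar>n\<bar>} \<times> {0..\<bar>n\<bar>}" unfolding tri_def by auto
  then show ?thesis by (rule finite_subset) simp
qed

definition shp :: "int \<Rightarrow> int \<Rightarrow> pt \<Rightarrow> pt" where "shp u v = (\<lambda>(x,y). (x+u, y+v))"

lemma shp_inj: "inj (shp u v)" unfolding shp_def inj_def by auto

lemma card_shp_tri: "card (shp u v ` tri n) = card (tri n)"
  by (rule card_image) (rule inj_on_subset[OF shp_inj], simp)

definition triS :: "int \<Rightarrow> int \<Rightarrow> int \<Rightarrow> pt set" where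
  "triS u v n = {(x,y). 0 \<le> x - u \<and> 0 \<le> y - v \<and> x - u + (y - v) \<le> n - 1}"

lemma mem_shp_tri: "(x,y) \<in> shp u v ` tri n \<longleftrightarrow> 0 \<le> x - u \<and> 0 \<le> y - v \<and> x - u + (y - v) \<le> n - 1"
proof
  assume "(x,y) \<in> shp u v ` tri n"
  then show "0 \<le> x - u \<and> 0 \<le> y - v \<and> x - u + (y - v) \<le> n - 1" unfolding shp_def tri_def by auto
next
  assume h: "0 \<le> x - u \<and> 0 \<le> y - v \<and> x - u + (y - v) \<le> n - 1"
  have "(x-u, y-v) \<in> tri n" using h unfolding tri_def by auto
  moreover have "(x,y) = shp u v (x-u, y-v)" unfolding shp_def by simp
  ultimately show "(x,y) \<in> shp u v ` tri n" by blast
qed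

lemma triS_eq: "triS u v n = shp u v ` tri n"
proof (rule set_eqI)
  fix z :: pt
  obtain x y where z: "z = (x,y)" by force
  show "z \<in> triS u v n \<longleftrightarrow> z \<in> shp u v ` tri n" unfolding z mem_shp_tri triS_def by simp
qed

lemma card_triS: "card (triS u v n) = card (tri n)"
  unfolding triS_eq by (rule card_shp_tri)
lemma triS_finite: "finite (triS u v n)"
  unfolding triS_eq using tri_finite by simp

definition UT :: "int \<Rightarrow> int \<Rightarrow> int \<Rightarrow> int \<Rightarrow> pt set" where
  "UT d a b c = {(x,y). 0 \<le> x \<and> 0 \<le> y \<and> x \<le> d - b - 1 \<and> y \<le> d - c - 1 \<and> a \<le> x + y \<and> x + y \<le> d - 1}"
definition DT :: "int \<Rightarrow> int \<Rightarrow> int \<Rightarrow> int \<Rightarrow> pt set" where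
  "DT d a b c = {(x,y). 0 \<le> x \<and> 0 \<le> y \<and> x \<le> d - b - 1 \<and> y \<le> d - c - 1 \<and> a - 1 \<le> x + y \<and> x + y \<le> d - 2}"

lemma T_split: "T d a b c = (\<lambda>(x,y). up_face x y) ` UT d a b c \<union> (\<lambda>(x,y). down_face x y) ` DT d a b c"
  unfolding T_def UT_def DT_def by (auto simp: image_iff)

lemma UT_decomp:
  assumes "0 \<le> a" "0 \<le> b" "0 \<le> c" "a + b \<le> d" "b + c \<le> d" "a + c \<le> d"
  shows "UT d a b c = tri d - (tri a \<union> triS (d-b) 0 b \<union> triS 0 (d-c) c)"
    and "tri a \<subseteq> tri d" "triS (d-b) 0 b \<subseteq> tri d" "triS 0 (d-c) c \<subseteq> tri d"
    and "tri a \<inter> triS (d-b) 0 b = {}" "tri a \<inter> triS 0 (d-c) c = {}"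
    and "triS (d-b) 0 b \<inter> triS 0 (d-c) c = {}"
  using assms unfolding UT_def triS_def tri_def by auto

lemma DT_decomp:
  assumes "0 \<le> a" "0 \<le> b" "0 \<le> c" "a + b \<le> d" "b + c \<le> d" "a + c \<le> d"
  shows "DT d a b c = tri (d-1) - (tri (a-1) \<union> triS (d-b) 0 (b-1) \<union> triS 0 (d-c) (c-1))"
    and "tri (a-1) \<subseteq> tri (d-1)" "triS (d-b) 0 (b-1) \<subseteq> tri (d-1)" "triS 0 (d-c) (c-1) \<subseteq> tri (d-1)"
    and "tri (a-1) \<inter> triS (d-b) 0 (b-1) = {}" "tri (a-1) \<inter> triS 0 (d-c) (c-1) = {}"
    and "triS (d-b) 0 (b-1) \<inter> triS 0 (d-c) (c-1) = {}"
  using assms unfolding DT_def triS_def tri_def by auto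

lemma card_diff3:
  fixes X A B C :: "'a set"
  assumes "finite X" "A \<subseteq> X" "B \<subseteq> X" "C \<subseteq> X" "A \<inter> B = {}" "A \<inter> C = {}" "B \<inter> C = {}"
  shows "int (card (X - (A \<union> B \<union> C))) = int (card X) - int (card A) - int (card B) - int (card C)"
proof -
  have f: "finite A" "finite B" "finite C" using assms finite_subset by blast+
  have "card (A \<union> B \<union> C) = card A + card B + card C"
    using assms f by (simp add: card_Un_disjoint Int_Un_distrib2)
  moreover have "card (X - (A \<union> B \<union> C)) = card X - card (A \<union> B \<union> C)"
    using assms by (intro card_Diff_subset) (auto intro: finite_subset)
  moreover have "card (A \<union> B \<union> C) \<le> card X" using assms by (intro card_mono) auto
  ultimately show ?thesis by simp
qed

lemma card_T:
  assumes "0 \<le> a" "0 \<le> b" "0 \<le> c" "a + b \<le> d" "b + c \<le> d" "a + c \<le> d"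
  shows "int (card (T d a b c)) = d^2 - a^2 - b^2 - c^2"
proof -
  have cu: "2 * int (card (UT d a b c)) = d*(d+1) - a*(a+1) - b*(b+1) - c*(c+1)"
  proof -
    have "int (card (UT d a b c)) = int (card (tri d)) - int (card (tri a)) - int (card (triS (d-b) 0 b)) - int (card (triS 0 (d-c) c))"
      unfolding UT_decomp(1)[OF assms] by (rule card_diff3) (use UT_decomp[OF assms] tri_finite triS_finite in auto)
    then show ?thesis unfolding card_triS using tri_card[of d] tri_card[of a] tri_card[of b] tri_card[of c] assms
      by (simp add: algebra_simps)
  qed
  have cd: "2 * int (card (DT d a b c)) = (d-1)*d - (a-1)*a - (b-1)*b - (c-1)*c"
  proof -
    have "int (card (DT d a b c)) = int (card (tri (d-1))) - int (card (tri (a-1))) - int (card (triS (d-b) 0 (b-1))) - int (card (triS 0 (d-c) (c-1)))"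
      unfolding DT_decomp(1)[OF assms] by (rule card_diff3) (use DT_decomp[OF assms] tri_finite triS_finite in auto)
    then show ?thesis unfolding card_triS using tri_card[of "d-1"] tri_card[of "a-1"] tri_card[of "b-1"] tri_card[of "c-1"] assms
      by (simp add: algebra_simps)
  qed
  have finU: "finite (UT d a b c)" unfolding UT_decomp(1)[OF assms] using tri_finite triS_finite by simp
  have finD: "finite (DT d a b c)" unfolding DT_decomp(1)[OF assms] using tri_finite triS_finite by simp
  have "card (T d a b c) = card ((\<lambda>(x,y). up_face x y) ` UT d a b c) + card ((\<lambda>(x,y). down_face x y) ` DT d a b c)"
    unfolding T_split using finU finD by (intro card_Un_disjoint) auto
  also have "\<dots> = card (UT d a b c) + card (DT d a b c)"
    by (subst card_image, force simp: inj_on_def)+ simp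
  finally show ?thesis using cu cd by (simp add: power2_eq_square algebra_simps)
qed


lemma shp_up: "shp u v ` up_face x y = up_face (x+u) (y+v)"
  unfolding shp_def up_face_def by (simp add: algebra_simps)
lemma shp_down: "shp u v ` down_face x y = down_face (x+u) (y+v)"
  unfolding shp_def down_face_def by (simp add: algebra_simps)

lemma face_ck: "is_face F \<Longrightarrow> ci F + cj F \<le> ck F \<and> ck F \<le> ci F + cj F + 1"
  by (erule face_cases) auto

locale hull =
  fixes P :: "face set" and i0 i1 j0 j1 k0 k1 :: int
  assumes P: "polyiamond P"
    and i0: "i0 = Min (ci ` P)" and i1: "i1 = Max (ci ` P)"
    and j0: "j0 = Min (cj ` P)" and j1: "j1 = Max (cj ` P)"
    and k0: "k0 = Min (ck ` P)" and k1: "k1 = Max (ck ` P)"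
begin

lemma finP: "finite P" and neP: "P \<noteq> {}" using P unfolding polyiamond_def by auto

lemma bounds: "F \<in> P \<Longrightarrow> i0 \<le> ci F \<and> ci F \<le> i1 \<and> j0 \<le> cj F \<and> cj F \<le> j1 \<and> k0 \<le> ck F \<and> ck F \<le> k1"
  using finP unfolding i0 i1 j0 j1 k0 k1 by (auto intro: Min_le Max_ge)

lemma attain: "\<exists>F\<in>P. ci F = i0" "\<exists>F\<in>P. ci F = i1" "\<exists>F\<in>P. cj F = j0" "\<exists>F\<in>P. cj F = j1"
   "\<exists>F\<in>P. ck F = k0" "\<exists>F\<in>P. ck F = k1"
proof -
  have f: "finite (c ` P)" "c ` P \<noteq> {}" for c :: "face \<Rightarrow> int" using finP neP by auto
  show "\<exists>F\<in>P. ci F = i0" using Min_in[OF f[of ci]] unfolding i0 by force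
  show "\<exists>F\<in>P. ci F = i1" using Max_in[OF f[of ci]] unfolding i1 by force
  show "\<exists>F\<in>P. cj F = j0" using Min_in[OF f[of cj]] unfolding j0 by force
  show "\<exists>F\<in>P. cj F = j1" using Max_in[OF f[of cj]] unfolding j1 by force
  show "\<exists>F\<in>P. ck F = k0" using Min_in[OF f[of ck]] unfolding k0 by force
  show "\<exists>F\<in>P. ck F = k1" using Max_in[OF f[of ck]] unfolding k1 by force
qed

definition "dd = k1 - i0 - j0 + 1"
definition "aa = k0 - i0 - j0"
definition "bb = k1 - j0 - i1"
definition "cc = k1 - i0 - j1"

lemma consts_ok: "0 \<le> aa" "0 \<le> bb" "0 \<le> cc" "aa + bb \<le> dd" "bb + cc \<le> dd" "aa + cc \<le> dd"
proof -
  have fc: "F \<in> P \<Longrightarrow> ci F + cj F \<le> ck F \<and> ck F \<le> ci F + cj F + 1" for F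
    using face_ck poly_faces[OF P] by blast
  obtain F1 where F1: "F1 \<in> P" "ck F1 = k0" using attain by blast
  show "0 \<le> aa" using fc[OF F1(1)] bounds[OF F1(1)] F1 unfolding aa_def by linarith
  obtain F2 where F2: "F2 \<in> P" "ci F2 = i1" using attain by blast
  show "0 \<le> bb" using fc[OF F2(1)] bounds[OF F2(1)] F2 unfolding bb_def by linarith
  obtain F3 where F3: "F3 \<in> P" "cj F3 = j1" using attain by blast
  show "0 \<le> cc" using fc[OF F3(1)] bounds[OF F3(1)] F3 unfolding cc_def by linarith
  obtain F4 where F4: "F4 \<in> P" "cj F4 = j0" using attain by blast
  show "aa + bb \<le> dd" using fc[OF F4(1)] bounds[OF F4(1)] F4 unfolding aa_def bb_def dd_def by linarith
  obtain F5 where F5: "F5 \<in> P" "ck F5 = k1" using attain by blast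
  show "bb + cc \<le> dd" using fc[OF F5(1)] bounds[OF F5(1)] F5 unfolding cc_def bb_def dd_def by linarith
  obtain F6 where F6: "F6 \<in> P" "ci F6 = i0" using attain by blast
  show "aa + cc \<le> dd" using fc[OF F6(1)] bounds[OF F6(1)] F6 unfolding aa_def cc_def dd_def by linarith
qed

lemma contain: "P \<subseteq> (\<lambda>F. shp i0 j0 ` F) ` T dd aa bb cc"
proof
  fix F assume F: "F \<in> P"
  have b: "i0 \<le> ci F \<and> ci F \<le> i1 \<and> j0 \<le> cj F \<and> cj F \<le> j1 \<and> k0 \<le> ck F \<and> ck F \<le> k1" using bounds[OF F] .
  have "is_face F" using poly_faces[OF P F] .
  then show "F \<in> (\<lambda>F. shp i0 j0 ` F) ` T dd aa bb cc"
  proof (rule face_cases)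
    fix x y assume Fu: "F = up_face x y"
    have "up_face (x - i0) (y - j0) \<in> T dd aa bb cc"
      using b unfolding Fu T_def dd_def aa_def bb_def cc_def by auto
    moreover have "F = shp i0 j0 ` up_face (x - i0) (y - j0)" unfolding Fu shp_up by simp
    ultimately show ?thesis by blast
  next
    fix x y assume Fd: "F = down_face x y"
    have "down_face (x - i0) (y - j0) \<in> T dd aa bb cc"
      using b unfolding Fd T_def dd_def aa_def bb_def cc_def by auto
    moreover have "F = shp i0 j0 ` down_face (x - i0) (y - j0)" unfolding Fd shp_down by simp
    ultimately show ?thesis by blast
  qed
qed

lemma card_le: "int (card P) \<le> dd^2 - aa^2 - bb^2 - cc^2"
proof -
  have "card P \<le> card ((\<lambda>F. shp i0 j0 ` F) ` T dd aa bb cc)"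
  proof (rule card_mono[OF _ contain])
    have "finite (T dd aa bb cc)" using card_T[OF consts_ok] 
      by (metis T_split UT_decomp(1)[OF consts_ok] DT_decomp(1)[OF consts_ok] tri_finite finite_Diff finite_Un finite_imageI)
    then show "finite ((\<lambda>F. shp i0 j0 ` F) ` T dd aa bb cc)" by simp
  qed
  also have "\<dots> \<le> card (T dd aa bb cc)" by (rule card_image_le) (metis T_split UT_decomp(1)[OF consts_ok] DT_decomp(1)[OF consts_ok] tri_finite finite_Diff finite_Un finite_imageI)
  finally show ?thesis using card_T[OF consts_ok] by linarith
qed

lemma perim_ge: "3 * dd - aa - bb - cc \<le> int (edge_perimeter P)"
proof -
  have "card {i0..i1} + card {j0..j1} + card {k0..k1} \<le> edge_perimeter P"
    using perim_lower[OF P] unfolding i0 i1 j0 j1 k0 k1 .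
  moreover have "i0 \<le> i1" "j0 \<le> j1" "k0 \<le> k1" using bounds attain by fastforce+
  ultimately show ?thesis unfolding dd_def aa_def bb_def cc_def by simp
qed

end

lemma sq_bound: fixes y n :: int assumes "y^2 < (n+1)^2" "0 \<le> n" shows "-n \<le> y \<and> y \<le> n"
proof -
  have "\<bar>y\<bar>^2 < (n+1)^2" using assms by simp
  then have "\<bar>y\<bar> < n + 1" using power_less_imp_less_base[of "\<bar>y\<bar>" 2 "n+1"] assms by simp
  then show ?thesis by linarith
qed

lemma main_ineq:
  fixes d a b c :: int
  shows "(3*d - a - b - c)^2 - 6*(d^2 - a^2 - b^2 - c^2) = 3*(d - (a+b+c))^2 + 2*((a-b)^2 + (b-c)^2 + (c-a)^2)"
  by (simp add: power2_eq_square algebra_simps)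

lemma cauchy3: fixes x y z :: int shows "(x+y+z)^2 \<le> 3*(x^2+y^2+z^2)"
proof -
  have "3*(x^2+y^2+z^2) - (x+y+z)^2 = (x-y)^2 + (y-z)^2 + (z-x)^2" by (simp add: power2_eq_square algebra_simps)
  moreover have "0 \<le> (x-y)^2 + (y-z)^2 + (z-x)^2" by simp
  ultimately show ?thesis by linarith
qed

lemma delta_bound:
  fixes m \<delta> x y z cm :: int
  assumes "x + y + z = 3*\<delta> - m" "\<delta>^2 - x^2 - y^2 - z^2 \<ge> cm"
  shows "3*(2*\<delta> - m)^2 \<le> m^2 - 6*cm"
proof -
  have "(3*\<delta> - m)^2 \<le> 3*(x^2+y^2+z^2)" using cauchy3[of x y z] assms(1) by simp
  moreover have "x^2+y^2+z^2 \<le> \<delta>^2 - cm" using assms(2) by linarith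
  ultimately have "(3*\<delta> - m)^2 \<le> 3*(\<delta>^2 - cm)" by (smt (verit))
  then show ?thesis by (simp add: power2_eq_square algebra_simps)
qed

lemma each_bound:
  fixes \<delta> x y z cm :: int
  assumes "\<delta>^2 - x^2 - y^2 - z^2 \<ge> cm"
  shows "x^2 \<le> \<delta>^2 - cm" "y^2 \<le> \<delta>^2 - cm" "z^2 \<le> \<delta>^2 - cm"
proof -
  have "0 \<le> x^2" "0 \<le> y^2" "0 \<le> z^2" by simp_all
  then show "x^2 \<le> \<delta>^2 - cm" "y^2 \<le> \<delta>^2 - cm" "z^2 \<le> \<delta>^2 - cm" using assms by linarith+
qed

lemma int_range_cases: fixes x :: int shows "-2 \<le> x \<Longrightarrow> x \<le> 2 \<Longrightarrow> x = -2 \<or> x = -1 \<or> x = 0 \<or> x = 1 \<or> x = 2"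
  by arith


lemma enum0:
  fixes \<delta> x y z :: int
  assumes s: "x + y + z = 3*\<delta> - 0" and q: "\<delta>^2 - x^2 - y^2 - z^2 \<ge> 0"
  shows "(\<delta> = 0 \<and> x = 0 \<and> y = 0 \<and> z = 0)"
proof -
  have db: "3*(2*\<delta> - 0)^2 \<le> 0^2 - 6*(0)" by (rule delta_bound[OF s q])
  have "(2*\<delta> - 0)^2 < (1+1)^2" using db by simp
  then have dr: "-1 \<le> 2*\<delta> - 0 \<and> 2*\<delta> - 0 \<le> 1" using sq_bound[of "2*\<delta> - 0" 1] by simp
  have xb: "x^2 \<le> \<delta>^2 - (0)" "y^2 \<le> \<delta>^2 - (0)" using each_bound[OF q] by simp_all
  have dd: "\<delta> = 0 \<or> \<delta> = 0" using dr by linarith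
  have dsq: "\<delta>^2 - (0) \<le> 8" using dd by auto

  have "x^2 < (2+1)^2" "y^2 < (2+1)^2" using xb dsq by simp_all
  then have xr: "-2 \<le> x \<and> x \<le> 2" and yr: "-2 \<le> y \<and> y \<le> 2" using sq_bound[of x 2] sq_bound[of y 2] by simp_all
  have zz: "z = 3*\<delta> - 0 - x - y" using s by simp
  have all: "\<forall>\<delta>\<in>set [0,0::int]. \<forall>x\<in>set [-2,-1,0,1,2::int]. \<forall>y\<in>set [-2,-1,0,1,2::int].
      (\<delta>*\<delta> - x*x - y*y - (3*\<delta> - 0 - x - y)*(3*\<delta> - 0 - x - y) \<ge> 0) \<longrightarrow> (let z = 3*\<delta> - 0 - x - y in (\<delta> = 0 \<and> x = 0 \<and> y = 0 \<and> z = 0))"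
    by (simp add: Let_def)
  have "x \<in> set [-2,-1,0,1,2::int]" "y \<in> set [-2,-1,0,1,2::int]" "\<delta> \<in> set [0,0::int]"
    using int_range_cases[of x] int_range_cases[of y] xr yr dd by auto
  then have "(\<delta>*\<delta> - x*x - y*y - (3*\<delta> - 0 - x - y)*(3*\<delta> - 0 - x - y) \<ge> 0) \<longrightarrow> (let z = 3*\<delta> - 0 - x - y in (\<delta> = 0 \<and> x = 0 \<and> y = 0 \<and> z = 0))"
    using all by blast
  then show ?thesis using q unfolding zz by (simp add: Let_def power2_eq_square)
qed

lemma enum1:
  fixes \<delta> x y z :: int
  assumes s: "x + y + z = 3*\<delta> - 1" and q: "\<delta>^2 - x^2 - y^2 - z^2 \<ge> (-1)"
  shows "(\<delta> = 0 \<and> x = (-1) \<and> y = 0 \<and> z = 0) \<or> (\<delta> = 0 \<and> x = 0 \<and> y = (-1) \<and> z = 0) \<or> (\<delta> = 0 \<and> x = 0 \<and> y = 0 \<and> z = (-1)) \<or> (\<delta> = 1 \<and> x = 0 \<and> y = 1 \<and> z = 1) \<or> (\<delta> = 1 \<and> x = 1 \<and> y = 0 \<and> z = 1) \<or> (\<delta> = 1 \<and> x = 1 \<and> y = 1 \<and> z = 0)"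
proof -
  have db: "3*(2*\<delta> - 1)^2 \<le> 1^2 - 6*((-1))" by (rule delta_bound[OF s q])
  have "(2*\<delta> - 1)^2 < (1+1)^2" using db by simp
  then have dr: "-1 \<le> 2*\<delta> - 1 \<and> 2*\<delta> - 1 \<le> 1" using sq_bound[of "2*\<delta> - 1" 1] by simp
  have xb: "x^2 \<le> \<delta>^2 - ((-1))" "y^2 \<le> \<delta>^2 - ((-1))" using each_bound[OF q] by simp_all
  have dd: "\<delta> = 0 \<or> \<delta> = 1" using dr by linarith
  have dsq: "\<delta>^2 - ((-1)) \<le> 8" using dd by auto

  have "x^2 < (2+1)^2" "y^2 < (2+1)^2" using xb dsq by simp_all
  then have xr: "-2 \<le> x \<and> x \<le> 2" and yr: "-2 \<le> y \<and> y \<le> 2" using sq_bound[of x 2] sq_bound[of y 2] by simp_all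
  have zz: "z = 3*\<delta> - 1 - x - y" using s by simp
  have all: "\<forall>\<delta>\<in>set [0,1::int]. \<forall>x\<in>set [-2,-1,0,1,2::int]. \<forall>y\<in>set [-2,-1,0,1,2::int].
      (\<delta>*\<delta> - x*x - y*y - (3*\<delta> - 1 - x - y)*(3*\<delta> - 1 - x - y) \<ge> (-1)) \<longrightarrow> (let z = 3*\<delta> - 1 - x - y in (\<delta> = 0 \<and> x = (-1) \<and> y = 0 \<and> z = 0) \<or> (\<delta> = 0 \<and> x = 0 \<and> y = (-1) \<and> z = 0) \<or> (\<delta> = 0 \<and> x = 0 \<and> y = 0 \<and> z = (-1)) \<or> (\<delta> = 1 \<and> x = 0 \<and> y = 1 \<and> z = 1) \<or> (\<delta> = 1 \<and> x = 1 \<and> y = 0 \<and> z = 1) \<or> (\<delta> = 1 \<and> x = 1 \<and> y = 1 \<and> z = 0))"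
    by (simp add: Let_def)
  have "x \<in> set [-2,-1,0,1,2::int]" "y \<in> set [-2,-1,0,1,2::int]" "\<delta> \<in> set [0,1::int]"
    using int_range_cases[of x] int_range_cases[of y] xr yr dd by auto
  then have "(\<delta>*\<delta> - x*x - y*y - (3*\<delta> - 1 - x - y)*(3*\<delta> - 1 - x - y) \<ge> (-1)) \<longrightarrow> (let z = 3*\<delta> - 1 - x - y in (\<delta> = 0 \<and> x = (-1) \<and> y = 0 \<and> z = 0) \<or> (\<delta> = 0 \<and> x = 0 \<and> y = (-1) \<and> z = 0) \<or> (\<delta> = 0 \<and> x = 0 \<and> y = 0 \<and> z = (-1)) \<or> (\<delta> = 1 \<and> x = 0 \<and> y = 1 \<and> z = 1) \<or> (\<delta> = 1 \<and> x = 1 \<and> y = 0 \<and> z = 1) \<or> (\<delta> = 1 \<and> x = 1 \<and> y = 1 \<and> z = 0))"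
    using all by blast
  then show ?thesis using q unfolding zz by (simp add: Let_def power2_eq_square)
qed

lemma enum2:
  fixes \<delta> x y z :: int
  assumes s: "x + y + z = 3*\<delta> - 2" and q: "\<delta>^2 - x^2 - y^2 - z^2 \<ge> 0"
  shows "(\<delta> = 1 \<and> x = 0 \<and> y = 0 \<and> z = 1) \<or> (\<delta> = 1 \<and> x = 0 \<and> y = 1 \<and> z = 0) \<or> (\<delta> = 1 \<and> x = 1 \<and> y = 0 \<and> z = 0)"
proof -
  have db: "3*(2*\<delta> - 2)^2 \<le> 2^2 - 6*(0)" by (rule delta_bound[OF s q])
  have "(2*\<delta> - 2)^2 < (1+1)^2" using db by simp
  then have dr: "-1 \<le> 2*\<delta> - 2 \<and> 2*\<delta> - 2 \<le> 1" using sq_bound[of "2*\<delta> - 2" 1] by simp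
  have xb: "x^2 \<le> \<delta>^2 - (0)" "y^2 \<le> \<delta>^2 - (0)" using each_bound[OF q] by simp_all
  have dd: "\<delta> = 1 \<or> \<delta> = 1" using dr by linarith
  have dsq: "\<delta>^2 - (0) \<le> 8" using dd by auto

  have "x^2 < (2+1)^2" "y^2 < (2+1)^2" using xb dsq by simp_all
  then have xr: "-2 \<le> x \<and> x \<le> 2" and yr: "-2 \<le> y \<and> y \<le> 2" using sq_bound[of x 2] sq_bound[of y 2] by simp_all
  have zz: "z = 3*\<delta> - 2 - x - y" using s by simp
  have all: "\<forall>\<delta>\<in>set [1,1::int]. \<forall>x\<in>set [-2,-1,0,1,2::int]. \<forall>y\<in>set [-2,-1,0,1,2::int].
      (\<delta>*\<delta> - x*x - y*y - (3*\<delta> - 2 - x - y)*(3*\<delta> - 2 - x - y) \<ge> 0) \<longrightarrow> (let z = 3*\<delta> - 2 - x - y in (\<delta> = 1 \<and> x = 0 \<and> y = 0 \<and> z = 1) \<or> (\<delta> = 1 \<and> x = 0 \<and> y = 1 \<and> z = 0) \<or> (\<delta> = 1 \<and> x = 1 \<and> y = 0 \<and> z = 0))"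
    by (simp add: Let_def)
  have "x \<in> set [-2,-1,0,1,2::int]" "y \<in> set [-2,-1,0,1,2::int]" "\<delta> \<in> set [1,1::int]"
    using int_range_cases[of x] int_range_cases[of y] xr yr dd by auto
  then have "(\<delta>*\<delta> - x*x - y*y - (3*\<delta> - 2 - x - y)*(3*\<delta> - 2 - x - y) \<ge> 0) \<longrightarrow> (let z = 3*\<delta> - 2 - x - y in (\<delta> = 1 \<and> x = 0 \<and> y = 0 \<and> z = 1) \<or> (\<delta> = 1 \<and> x = 0 \<and> y = 1 \<and> z = 0) \<or> (\<delta> = 1 \<and> x = 1 \<and> y = 0 \<and> z = 0))"
    using all by blast
  then show ?thesis using q unfolding zz by (simp add: Let_def power2_eq_square)
qed

lemma enum3:
  fixes \<delta> x y z :: int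
  assumes s: "x + y + z = 3*\<delta> - 3" and q: "\<delta>^2 - x^2 - y^2 - z^2 \<ge> 1"
  shows "(\<delta> = 1 \<and> x = 0 \<and> y = 0 \<and> z = 0) \<or> (\<delta> = 2 \<and> x = 1 \<and> y = 1 \<and> z = 1)"
proof -
  have db: "3*(2*\<delta> - 3)^2 \<le> 3^2 - 6*(1)" by (rule delta_bound[OF s q])
  have "(2*\<delta> - 3)^2 < (1+1)^2" using db by simp
  then have dr: "-1 \<le> 2*\<delta> - 3 \<and> 2*\<delta> - 3 \<le> 1" using sq_bound[of "2*\<delta> - 3" 1] by simp
  have xb: "x^2 \<le> \<delta>^2 - (1)" "y^2 \<le> \<delta>^2 - (1)" using each_bound[OF q] by simp_all
  have dd: "\<delta> = 1 \<or> \<delta> = 2" using dr by linarith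
  have dsq: "\<delta>^2 - (1) \<le> 8" using dd by auto

  have "x^2 < (2+1)^2" "y^2 < (2+1)^2" using xb dsq by simp_all
  then have xr: "-2 \<le> x \<and> x \<le> 2" and yr: "-2 \<le> y \<and> y \<le> 2" using sq_bound[of x 2] sq_bound[of y 2] by simp_all
  have zz: "z = 3*\<delta> - 3 - x - y" using s by simp
  have all: "\<forall>\<delta>\<in>set [1,2::int]. \<forall>x\<in>set [-2,-1,0,1,2::int]. \<forall>y\<in>set [-2,-1,0,1,2::int].
      (\<delta>*\<delta> - x*x - y*y - (3*\<delta> - 3 - x - y)*(3*\<delta> - 3 - x - y) \<ge> 1) \<longrightarrow> (let z = 3*\<delta> - 3 - x - y in (\<delta> = 1 \<and> x = 0 \<and> y = 0 \<and> z = 0) \<or> (\<delta> = 2 \<and> x = 1 \<and> y = 1 \<and> z = 1))"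
    by (simp add: Let_def)
  have "x \<in> set [-2,-1,0,1,2::int]" "y \<in> set [-2,-1,0,1,2::int]" "\<delta> \<in> set [1,2::int]"
    using int_range_cases[of x] int_range_cases[of y] xr yr dd by auto
  then have "(\<delta>*\<delta> - x*x - y*y - (3*\<delta> - 3 - x - y)*(3*\<delta> - 3 - x - y) \<ge> 1) \<longrightarrow> (let z = 3*\<delta> - 3 - x - y in (\<delta> = 1 \<and> x = 0 \<and> y = 0 \<and> z = 0) \<or> (\<delta> = 2 \<and> x = 1 \<and> y = 1 \<and> z = 1))"
    using all by blast
  then show ?thesis using q unfolding zz by (simp add: Let_def power2_eq_square)
qed

lemma enum4:
  fixes \<delta> x y z :: int
  assumes s: "x + y + z = 3*\<delta> - 4" and q: "\<delta>^2 - x^2 - y^2 - z^2 \<ge> 2"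
  shows "(\<delta> = 2 \<and> x = 0 \<and> y = 1 \<and> z = 1) \<or> (\<delta> = 2 \<and> x = 1 \<and> y = 0 \<and> z = 1) \<or> (\<delta> = 2 \<and> x = 1 \<and> y = 1 \<and> z = 0)"
proof -
  have db: "3*(2*\<delta> - 4)^2 \<le> 4^2 - 6*(2)" by (rule delta_bound[OF s q])
  have "(2*\<delta> - 4)^2 < (1+1)^2" using db by simp
  then have dr: "-1 \<le> 2*\<delta> - 4 \<and> 2*\<delta> - 4 \<le> 1" using sq_bound[of "2*\<delta> - 4" 1] by simp
  have xb: "x^2 \<le> \<delta>^2 - (2)" "y^2 \<le> \<delta>^2 - (2)" using each_bound[OF q] by simp_all
  have dd: "\<delta> = 2 \<or> \<delta> = 2" using dr by linarith
  have dsq: "\<delta>^2 - (2) \<le> 8" using dd by auto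

  have "x^2 < (2+1)^2" "y^2 < (2+1)^2" using xb dsq by simp_all
  then have xr: "-2 \<le> x \<and> x \<le> 2" and yr: "-2 \<le> y \<and> y \<le> 2" using sq_bound[of x 2] sq_bound[of y 2] by simp_all
  have zz: "z = 3*\<delta> - 4 - x - y" using s by simp
  have all: "\<forall>\<delta>\<in>set [2,2::int]. \<forall>x\<in>set [-2,-1,0,1,2::int]. \<forall>y\<in>set [-2,-1,0,1,2::int].
      (\<delta>*\<delta> - x*x - y*y - (3*\<delta> - 4 - x - y)*(3*\<delta> - 4 - x - y) \<ge> 2) \<longrightarrow> (let z = 3*\<delta> - 4 - x - y in (\<delta> = 2 \<and> x = 0 \<and> y = 1 \<and> z = 1) \<or> (\<delta> = 2 \<and> x = 1 \<and> y = 0 \<and> z = 1) \<or> (\<delta> = 2 \<and> x = 1 \<and> y = 1 \<and> z = 0))"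
    by (simp add: Let_def)
  have "x \<in> set [-2,-1,0,1,2::int]" "y \<in> set [-2,-1,0,1,2::int]" "\<delta> \<in> set [2,2::int]"
    using int_range_cases[of x] int_range_cases[of y] xr yr dd by auto
  then have "(\<delta>*\<delta> - x*x - y*y - (3*\<delta> - 4 - x - y)*(3*\<delta> - 4 - x - y) \<ge> 2) \<longrightarrow> (let z = 3*\<delta> - 4 - x - y in (\<delta> = 2 \<and> x = 0 \<and> y = 1 \<and> z = 1) \<or> (\<delta> = 2 \<and> x = 1 \<and> y = 0 \<and> z = 1) \<or> (\<delta> = 2 \<and> x = 1 \<and> y = 1 \<and> z = 0))"
    using all by blast
  then show ?thesis using q unfolding zz by (simp add: Let_def power2_eq_square)
qed

lemma enum5:
  fixes \<delta> x y z :: int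
  assumes s: "x + y + z = 3*\<delta> - 5" and q: "\<delta>^2 - x^2 - y^2 - z^2 \<ge> 3"
  shows "(\<delta> = 2 \<and> x = 0 \<and> y = 0 \<and> z = 1) \<or> (\<delta> = 2 \<and> x = 0 \<and> y = 1 \<and> z = 0) \<or> (\<delta> = 2 \<and> x = 1 \<and> y = 0 \<and> z = 0) \<or> (\<delta> = 3 \<and> x = 1 \<and> y = 1 \<and> z = 2) \<or> (\<delta> = 3 \<and> x = 1 \<and> y = 2 \<and> z = 1) \<or> (\<delta> = 3 \<and> x = 2 \<and> y = 1 \<and> z = 1)"
proof -
  have db: "3*(2*\<delta> - 5)^2 \<le> 5^2 - 6*(3)" by (rule delta_bound[OF s q])
  have "(2*\<delta> - 5)^2 < (1+1)^2" using db by simp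
  then have dr: "-1 \<le> 2*\<delta> - 5 \<and> 2*\<delta> - 5 \<le> 1" using sq_bound[of "2*\<delta> - 5" 1] by simp
  have xb: "x^2 \<le> \<delta>^2 - (3)" "y^2 \<le> \<delta>^2 - (3)" using each_bound[OF q] by simp_all
  have dd: "\<delta> = 2 \<or> \<delta> = 3" using dr by linarith
  have dsq: "\<delta>^2 - (3) \<le> 8" using dd by auto

  have "x^2 < (2+1)^2" "y^2 < (2+1)^2" using xb dsq by simp_all
  then have xr: "-2 \<le> x \<and> x \<le> 2" and yr: "-2 \<le> y \<and> y \<le> 2" using sq_bound[of x 2] sq_bound[of y 2] by simp_all
  have zz: "z = 3*\<delta> - 5 - x - y" using s by simp
  have all: "\<forall>\<delta>\<in>set [2,3::int]. \<forall>x\<in>set [-2,-1,0,1,2::int]. \<forall>y\<in>set [-2,-1,0,1,2::int].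
      (\<delta>*\<delta> - x*x - y*y - (3*\<delta> - 5 - x - y)*(3*\<delta> - 5 - x - y) \<ge> 3) \<longrightarrow> (let z = 3*\<delta> - 5 - x - y in (\<delta> = 2 \<and> x = 0 \<and> y = 0 \<and> z = 1) \<or> (\<delta> = 2 \<and> x = 0 \<and> y = 1 \<and> z = 0) \<or> (\<delta> = 2 \<and> x = 1 \<and> y = 0 \<and> z = 0) \<or> (\<delta> = 3 \<and> x = 1 \<and> y = 1 \<and> z = 2) \<or> (\<delta> = 3 \<and> x = 1 \<and> y = 2 \<and> z = 1) \<or> (\<delta> = 3 \<and> x = 2 \<and> y = 1 \<and> z = 1))"
    by (simp add: Let_def)
  have "x \<in> set [-2,-1,0,1,2::int]" "y \<in> set [-2,-1,0,1,2::int]" "\<delta> \<in> set [2,3::int]"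
    using int_range_cases[of x] int_range_cases[of y] xr yr dd by auto
  then have "(\<delta>*\<delta> - x*x - y*y - (3*\<delta> - 5 - x - y)*(3*\<delta> - 5 - x - y) \<ge> 3) \<longrightarrow> (let z = 3*\<delta> - 5 - x - y in (\<delta> = 2 \<and> x = 0 \<and> y = 0 \<and> z = 1) \<or> (\<delta> = 2 \<and> x = 0 \<and> y = 1 \<and> z = 0) \<or> (\<delta> = 2 \<and> x = 1 \<and> y = 0 \<and> z = 0) \<or> (\<delta> = 3 \<and> x = 1 \<and> y = 1 \<and> z = 2) \<or> (\<delta> = 3 \<and> x = 1 \<and> y = 2 \<and> z = 1) \<or> (\<delta> = 3 \<and> x = 2 \<and> y = 1 \<and> z = 1))"
    using all by blast
  then show ?thesis using q unfolding zz by (simp add: Let_def power2_eq_square)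
qed

definition cong :: "face set \<Rightarrow> face set \<Rightarrow> bool" where
  "cong X Y \<longleftrightarrow> (\<exists>g. lattice_symmetry g \<and> X = (\<lambda>F. g ` F) ` Y)"

lemma lattice_symmetry_comp: "lattice_symmetry g \<Longrightarrow> lattice_symmetry h \<Longrightarrow> lattice_symmetry (g \<circ> h)"
proof -
  assume g: "lattice_symmetry g" and h: "lattice_symmetry h"
  have "bij (g \<circ> h)" using g h unfolding lattice_symmetry_def by (simp add: bij_comp)
  moreover have "sqdist ((g \<circ> h) p) ((g \<circ> h) q) = sqdist p q" for p q
    using g h unfolding lattice_symmetry_def by (simp del: split_paired_All)
  ultimately show ?thesis unfolding lattice_symmetry_def by blast
qed

lemma cong_trans: "cong X Y \<Longrightarrow> cong Y Z \<Longrightarrow> cong X Z"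
proof -
  assume "cong X Y" "cong Y Z"
  then obtain g h where g: "lattice_symmetry g" "X = (\<lambda>F. g ` F) ` Y"
    and h: "lattice_symmetry h" "Y = (\<lambda>F. h ` F) ` Z" unfolding cong_def by blast
  have "X = (\<lambda>F. (g \<circ> h) ` F) ` Z" unfolding g(2) h(2) by (auto simp: image_comp)
  then show "cong X Z" unfolding cong_def using lattice_symmetry_comp[OF g(1) h(1)] by blast
qed

lemma cong_refl: "cong X X"
proof -
  have "lattice_symmetry id" unfolding lattice_symmetry_def by simp
  then show ?thesis unfolding cong_def by (intro exI[of _ id]) auto
qed

lemma ls_intro:
  fixes g h :: "pt \<Rightarrow> pt"
  assumes "\<And>p. g (h p) = p" "\<And>p. h (g p) = p" "\<And>p q. sqdist (g p) (g q) = sqdist p q"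
  shows "lattice_symmetry g"
proof -
  have "bij g" by (rule o_bij[where g = h]) (use assms in \<open>auto simp: fun_eq_iff\<close>)
  then show ?thesis unfolding lattice_symmetry_def using assms(3) by simp
qed

definition rot :: "int \<Rightarrow> pt \<Rightarrow> pt" where "rot d = (\<lambda>(x,y). (d - x - y, x))"
definition swp :: "pt \<Rightarrow> pt" where "swp = (\<lambda>(x,y). (y, x))"
definition dua :: "int \<Rightarrow> int \<Rightarrow> pt \<Rightarrow> pt" where "dua u v = (\<lambda>(x,y). (u - x, v - y))"
definition trn :: "int \<Rightarrow> int \<Rightarrow> pt \<Rightarrow> pt" where "trn u v = (\<lambda>(x,y). (x + u, y + v))"

lemma ls_rot: "lattice_symmetry (rot d)"
  by (rule ls_intro[where h = "\<lambda>(x,y). (y, d - x - y)"]) (auto simp: rot_def sqdist_def Let_def algebra_simps)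
lemma ls_swp: "lattice_symmetry swp"
  by (rule ls_intro[where h = "swp"]) (auto simp: swp_def sqdist_def Let_def algebra_simps)
lemma ls_dua: "lattice_symmetry (dua u v)"
  by (rule ls_intro[where h = "dua u v"]) (auto simp: dua_def sqdist_def Let_def algebra_simps)
lemma ls_trn: "lattice_symmetry (trn u v)"
  by (rule ls_intro[where h = "trn (-u) (-v)"]) (auto simp: trn_def sqdist_def Let_def algebra_simps)

lemma rot_up: "rot d ` up_face x y = up_face (d - x - y - 1) x"
  unfolding rot_def up_face_def by (auto simp: algebra_simps)
lemma rot_down: "rot d ` down_face x y = down_face (d - x - y - 2) x"
  unfolding rot_def down_face_def by (auto simp: algebra_simps)
lemma swp_up: "swp ` up_face x y = up_face y x"
  unfolding swp_def up_face_def by auto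
lemma swp_down: "swp ` down_face x y = down_face y x"
  unfolding swp_def down_face_def by auto
lemma dua_up: "dua u v ` up_face x y = down_face (u - x - 1) (v - y - 1)"
  unfolding dua_def up_face_def down_face_def by (auto simp: algebra_simps)
lemma dua_down: "dua u v ` down_face x y = up_face (u - x - 1) (v - y - 1)"
  unfolding dua_def up_face_def down_face_def by (auto simp: algebra_simps)
lemma trn_up: "trn u v ` up_face x y = up_face (x + u) (y + v)"
  unfolding trn_def up_face_def by (auto simp: algebra_simps)
lemma trn_down: "trn u v ` down_face x y = down_face (x + u) (y + v)"
  unfolding trn_def down_face_def by (auto simp: algebra_simps)

lemma T_mem_up: "up_face x y \<in> T d a b c \<longleftrightarrow> 0 \<le> x \<and> 0 \<le> y \<and> x \<le> d - b - 1 \<and> y \<le> d - c - 1 \<and> a \<le> x + y \<and> x + y \<le> d - 1"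
  unfolding T_def by auto
lemma T_mem_down: "down_face x y \<in> T d a b c \<longleftrightarrow> 0 \<le> x \<and> 0 \<le> y \<and> x \<le> d - b - 1 \<and> y \<le> d - c - 1 \<and> a - 1 \<le> x + y \<and> x + y \<le> d - 2"
  unfolding T_def by auto
lemma T_faces: "F \<in> T d a b c \<Longrightarrow> (\<And>x y. F = up_face x y \<Longrightarrow> P) \<Longrightarrow> (\<And>x y. F = down_face x y \<Longrightarrow> P) \<Longrightarrow> P"
  unfolding T_def by blast

lemma img_T:
  assumes up: "\<And>x y. g ` up_face x y = fu x y" and down: "\<And>x y. g ` down_face x y = fd x y"
    and fwd_u: "\<And>x y. up_face x y \<in> T d a b c \<Longrightarrow> fu x y \<in> T'"
    and fwd_d: "\<And>x y. down_face x y \<in> T d a b c \<Longrightarrow> fd x y \<in> T'"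
    and bwd: "\<And>G. G \<in> T' \<Longrightarrow> \<exists>F \<in> T d a b c. G = g ` F"
  shows "(\<lambda>F. g ` F) ` T d a b c = T'"
proof
  show "(\<lambda>F. g ` F) ` T d a b c \<subseteq> T'"
  proof
    fix G assume "G \<in> (\<lambda>F. g ` F) ` T d a b c"
    then obtain F where F: "F \<in> T d a b c" "G = g ` F" by blast
    from F(1) show "G \<in> T'"
      by (rule T_faces) (use F fwd_u fwd_d up down in auto)
  qed
  show "T' \<subseteq> (\<lambda>F. g ` F) ` T d a b c" using bwd by blast
qed

lemma T_rot: "(\<lambda>F. rot d ` F) ` T d a b c = T d c a b"
proof (rule img_T[OF rot_up rot_down])
  fix x y show "up_face x y \<in> T d a b c \<Longrightarrow> up_face (d - x - y - 1) x \<in> T d c a b"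
    unfolding T_mem_up by auto
next
  fix x y show "down_face x y \<in> T d a b c \<Longrightarrow> down_face (d - x - y - 2) x \<in> T d c a b"
    unfolding T_mem_down by auto
next
  fix G assume "G \<in> T d c a b"
  then show "\<exists>F\<in>T d a b c. G = rot d ` F"
  proof (rule T_faces)
    fix X Y assume G: "G = up_face X Y"
    show ?thesis using \<open>G \<in> T d c a b\<close> unfolding G
      by (intro bexI[of _ "up_face Y (d - X - Y - 1)"]) (auto simp: rot_up T_mem_up)
  next
    fix X Y assume G: "G = down_face X Y"
    show ?thesis using \<open>G \<in> T d c a b\<close> unfolding G
      by (intro bexI[of _ "down_face Y (d - X - Y - 2)"]) (auto simp: rot_down T_mem_down)
  qed
qed

lemma T_swp: "(\<lambda>F. swp ` F) ` T d a b c = T d a c b"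
proof (rule img_T[OF swp_up swp_down])
  fix x y show "up_face x y \<in> T d a b c \<Longrightarrow> up_face y x \<in> T d a c b"
    unfolding T_mem_up by auto
next
  fix x y show "down_face x y \<in> T d a b c \<Longrightarrow> down_face y x \<in> T d a c b"
    unfolding T_mem_down by auto
next
  fix G assume "G \<in> T d a c b"
  then show "\<exists>F\<in>T d a b c. G = swp ` F"
  proof (rule T_faces)
    fix X Y assume G: "G = up_face X Y"
    show ?thesis using \<open>G \<in> T d a c b\<close> unfolding G
      by (intro bexI[of _ "up_face Y X"]) (auto simp: swp_up T_mem_up)
  next
    fix X Y assume G: "G = down_face X Y"
    show ?thesis using \<open>G \<in> T d a c b\<close> unfolding G
      by (intro bexI[of _ "down_face Y X"]) (auto simp: swp_down T_mem_down)
  qed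
qed

lemma T_dua: "(\<lambda>F. dua (d-b) (d-c) ` F) ` T d a b c = T (2*d-a-b-c) (d-b-c) (d-a-c) (d-a-b)"
proof (rule img_T[OF dua_up dua_down])
  fix x y show "up_face x y \<in> T d a b c \<Longrightarrow> down_face (d - b - x - 1) (d - c - y - 1) \<in> T (2*d-a-b-c) (d-b-c) (d-a-c) (d-a-b)"
    unfolding T_mem_up T_mem_down by auto
next
  fix x y show "down_face x y \<in> T d a b c \<Longrightarrow> up_face (d - b - x - 1) (d - c - y - 1) \<in> T (2*d-a-b-c) (d-b-c) (d-a-c) (d-a-b)"
    unfolding T_mem_up T_mem_down by auto
next
  fix G assume "G \<in> T (2*d-a-b-c) (d-b-c) (d-a-c) (d-a-b)"
  then show "\<exists>F\<in>T d a b c. G = dua (d-b) (d-c) ` F"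
  proof (rule T_faces)
    fix X Y assume G: "G = up_face X Y"
    show ?thesis using \<open>G \<in> T (2*d-a-b-c) (d-b-c) (d-a-c) (d-a-b)\<close> unfolding G
      by (intro bexI[of _ "down_face (d - b - X - 1) (d - c - Y - 1)"]) (auto simp: dua_down T_mem_up T_mem_down)
  next
    fix X Y assume G: "G = down_face X Y"
    show ?thesis using \<open>G \<in> T (2*d-a-b-c) (d-b-c) (d-a-c) (d-a-b)\<close> unfolding G
      by (intro bexI[of _ "up_face (d - b - X - 1) (d - c - Y - 1)"]) (auto simp: dua_up T_mem_up T_mem_down)
  qed
qed

lemma cong_rot: "cong (T d c a b) (T d a b c)"
  unfolding cong_def using ls_rot T_rot by metis
lemma cong_swp: "cong (T d a c b) (T d a b c)"
  unfolding cong_def using ls_swp T_swp by metis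
lemma cong_dua: "cong (T (2*d-a-b-c) (d-b-c) (d-a-c) (d-a-b)) (T d a b c)"
  unfolding cong_def using ls_dua T_dua by metis
lemma cong_dua': "cong (T d a b c) (T (2*d-a-b-c) (d-b-c) (d-a-c) (d-a-b))"
proof -
  have "cong (T (2*(2*d-a-b-c)-(d-b-c)-(d-a-c)-(d-a-b)) ((2*d-a-b-c)-(d-a-c)-(d-a-b)) ((2*d-a-b-c)-(d-b-c)-(d-a-b)) ((2*d-a-b-c)-(d-b-c)-(d-a-c)))
     (T (2*d-a-b-c) (d-b-c) (d-a-c) (d-a-b))" by (rule cong_dua)
  moreover have "(2*(2*d-a-b-c)-(d-b-c)-(d-a-c)-(d-a-b)) = d" "((2*d-a-b-c)-(d-a-c)-(d-a-b)) = a"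
    "((2*d-a-b-c)-(d-b-c)-(d-a-b)) = b" "((2*d-a-b-c)-(d-b-c)-(d-a-c)) = c" by simp_all
  ultimately show ?thesis by simp
qed

lemma cong_perm:
  "cong (T d a b c) (T d a b c)" "cong (T d a b c) (T d b c a)" "cong (T d a b c) (T d c a b)"
  "cong (T d a b c) (T d a c b)" "cong (T d a b c) (T d c b a)" "cong (T d a b c) (T d b a c)"
proof -
  show "cong (T d a b c) (T d a b c)" by (rule cong_refl)
  show 1: "cong (T d a b c) (T d b c a)" by (rule cong_rot)
  show 2: "cong (T d a b c) (T d c a b)" by (rule cong_trans[OF cong_rot cong_rot])
  show "cong (T d a b c) (T d a c b)" by (rule cong_swp)
  show "cong (T d a b c) (T d c b a)" by (rule cong_trans[OF cong_swp cong_rot])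
  show "cong (T d a b c) (T d b a c)" by (rule cong_trans[OF cong_rot cong_swp])
qed

locale goodT =
  fixes d a b c :: int
  assumes nn: "0 \<le> a" "0 \<le> b" "0 \<le> c" and pw: "a + b \<le> d" "b + c \<le> d" "a + c \<le> d"
    and s2: "a + b + c \<le> 2*d - 2"
begin

abbreviation "TT \<equiv> T d a b c"
definition "RR = {(X, Y). X \<in> TT \<and> Y \<in> TT \<and> adjacent X Y}"

lemma finT: "finite TT"
  by (metis T_split UT_decomp(1)[OF nn pw] DT_decomp(1)[OF nn pw] tri_finite triS_finite finite_Diff finite_Un finite_imageI)

definition "x0 = max 0 (a - (d - c - 1))"

lemma R_step: "X \<in> TT \<Longrightarrow> Y \<in> TT \<Longrightarrow> adjacent X Y \<Longrightarrow> (X, Y) \<in> RR" unfolding RR_def by simp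

lemma two_step: "(Z, W) \<in> RR\<^sup>* \<Longrightarrow> X \<in> TT \<Longrightarrow> Y \<in> TT \<Longrightarrow> Z \<in> TT \<Longrightarrow> adjacent X Y \<Longrightarrow> adjacent Y Z \<Longrightarrow> (X, W) \<in> RR\<^sup>*"
  by (meson R_step converse_rtrancl_into_rtrancl)

lemma up_conn: "up_face x y \<in> TT \<Longrightarrow> (up_face x y, up_face x0 (a - x0)) \<in> RR\<^sup>*"
proof (induction "nat (3*x + 2*y)" arbitrary: x y rule: less_induct)
  case less
  have h: "0 \<le> x" "0 \<le> y" "x \<le> d - b - 1" "y \<le> d - c - 1" "a \<le> x + y" "x + y \<le> d - 1"
    using less.prems unfolding T_mem_up by auto
  show ?case
  proof (cases "x + y > a")
    case True
    show ?thesis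
    proof (cases "x \<ge> 1")
      case True
      have m: "down_face (x-1) y \<in> TT" "up_face (x-1) y \<in> TT" using h \<open>x + y > a\<close> True unfolding T_mem_up T_mem_down by auto
      have "(up_face (x-1) y, up_face x0 (a - x0)) \<in> RR\<^sup>*" using less.hyps[of "x-1" y] m h True by auto
      then show ?thesis by (rule two_step[OF _ less.prems m(1) m(2)]) (auto simp: adj_up adj_down)
    next
      case False
      then have x: "x = 0" using h by simp
      have m: "down_face 0 (y-1) \<in> TT" "up_face 0 (y-1) \<in> TT" using h \<open>x + y > a\<close> x nn unfolding T_mem_up T_mem_down by auto
      have "(up_face 0 (y-1), up_face x0 (a - x0)) \<in> RR\<^sup>*" using less.hyps[of 0 "y-1"] m h x \<open>x + y > a\<close> nn by auto
      then show ?thesis unfolding x by (rule two_step[OF _ less.prems[unfolded x] m(1) m(2)]) (auto simp: adj_up adj_down)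
    qed
  next
    case False
    then have sa: "x + y = a" using h by simp
    show ?thesis
    proof (cases "x \<ge> 1 \<and> y + 1 \<le> d - c - 1")
      case True
      have m: "down_face (x-1) y \<in> TT" "up_face (x-1) (y+1) \<in> TT" using h sa True unfolding T_mem_up T_mem_down by auto
      have "(up_face (x-1) (y+1), up_face x0 (a - x0)) \<in> RR\<^sup>*" using less.hyps[of "x-1" "y+1"] m h True by auto
      then show ?thesis by (rule two_step[OF _ less.prems m(1) m(2)]) (auto simp: adj_up adj_down)
    next
      case False
      then have "x = x0 \<and> y = a - x0" using h sa unfolding x0_def by auto
      then show ?thesis by simp
    qed
  qed
qed

lemma down_has_up: "down_face x y \<in> TT \<Longrightarrow> \<exists>U\<in>TT. adjacent (down_face x y) U \<and> (\<exists>p q. U = up_face p q)"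
proof -
  assume "down_face x y \<in> TT"
  then have h: "0 \<le> x" "0 \<le> y" "x \<le> d - b - 1" "y \<le> d - c - 1" "a - 1 \<le> x + y" "x + y \<le> d - 2"
    unfolding T_mem_down by auto
  show ?thesis
  proof (cases "a \<le> x + y")
    case True
    then have "up_face x y \<in> TT" using h unfolding T_mem_up by auto
    then show ?thesis by (auto simp: adj_down)
  next
    case False
    show ?thesis
    proof (cases "x + 1 \<le> d - b - 1")
      case True
      then have "up_face (x+1) y \<in> TT" using h False unfolding T_mem_up by auto
      then show ?thesis by (auto simp: adj_down)
    next
      case F2: False
      then have "y + 1 \<le> d - c - 1" using h False s2 by linarith
      then have "up_face x (y+1) \<in> TT" using h False unfolding T_mem_up by auto
      then show ?thesis by (auto simp: adj_down)
    qed
  qed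
qed

lemma RR_sym: "(X, Y) \<in> RR\<^sup>* \<Longrightarrow> (Y, X) \<in> RR\<^sup>*"
proof -
  have "RR\<inverse> = RR" unfolding RR_def using adjacent_sym by auto
  moreover assume "(X, Y) \<in> RR\<^sup>*"
  ultimately show ?thesis by (metis rtrancl_converseI)
qed

lemma conn_base: assumes FT: "F \<in> TT" shows "(F, up_face x0 (a - x0)) \<in> RR\<^sup>*"
  using FT
proof (rule T_faces)
  fix x y assume "F = up_face x y" then show ?thesis using up_conn FT by simp
next
  fix x y assume F0: "F = down_face x y"
  have F: "F = down_face x y" "F \<in> TT" using F0 FT by auto
  then obtain U p q where U: "U \<in> TT" "adjacent F U" "U = up_face p q" using down_has_up by blast
  have "(U, up_face x0 (a - x0)) \<in> RR\<^sup>*" using up_conn U by simp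
  then show ?thesis using R_step[OF F(2) U(1) U(2)] by (meson converse_rtrancl_into_rtrancl)
qed

lemma poly_T: assumes "TT \<noteq> {}" shows "polyiamond TT"
  unfolding polyiamond_def
proof (intro conjI ballI)
  show "finite TT" by (rule finT)
  show "TT \<noteq> {}" by (rule assms)
  fix F assume "F \<in> TT" then show "is_face F" by (rule T_faces) auto
next
  fix F G assume F: "F \<in> TT" and G: "G \<in> TT"
  have "(F, G) \<in> RR\<^sup>*" using conn_base[OF F] RR_sym[OF conn_base[OF G]] by (rule rtrancl_trans)
  then show "(F, G) \<in> {(X, Y). X \<in> TT \<and> Y \<in> TT \<and> adjacent X Y}\<^sup>*" unfolding RR_def .
qed

lemma du1: "down_face x y \<inter> up_face x y = ant x y"
  unfolding up_face_def down_face_def ant_def by auto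
lemma du2: "down_face x y \<inter> up_face (x+1) y = ver (x+1) y"
  unfolding up_face_def down_face_def ver_def by auto
lemma du3: "down_face x y \<inter> up_face x (y+1) = hor x (y+1)"
  unfolding up_face_def down_face_def hor_def by auto

lemma card_img_le: "card (f ` {lo..hi::int}) \<le> nat (hi - lo + 1)"
  using card_image_le[of "{lo..hi}" f] by simp

lemma perim_T: "int (edge_perimeter TT) \<le> 3*d - a - b - c"
proof -
  define S1 where "S1 = (\<lambda>x. ant x (d-1-x)) ` {c..d-b-1}"
  define S2 where "S2 = (\<lambda>y. ver 0 y) ` {a..d-c-1}"
  define S3 where "S3 = (\<lambda>x. hor x 0) ` {a..d-b-1}"
  define S4 where "S4 = (\<lambda>x. ant x (a-1-x)) ` {0..a-1}"
  define S5 where "S5 = (\<lambda>y. ver (d-b) y) ` {0..b-1}"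
  define S6 where "S6 = (\<lambda>x. hor x (d-c)) ` {0..c-1}"
  have sub: "Bd TT \<subseteq> S1 \<union> S2 \<union> S3 \<union> S4 \<union> S5 \<union> S6"
  proof
    fix e assume "e \<in> Bd TT"
    then obtain F G where FG: "e = F \<inter> G" "F \<in> TT" "G \<notin> TT" "adjacent F G" unfolding Bd_def by blast
    from FG(2) show "e \<in> S1 \<union> S2 \<union> S3 \<union> S4 \<union> S5 \<union> S6"
    proof (rule T_faces)
      fix x y assume Fu: "F = up_face x y"
      have h: "0 \<le> x" "0 \<le> y" "x \<le> d - b - 1" "y \<le> d - c - 1" "a \<le> x + y" "x + y \<le> d - 1"
        using FG(2) unfolding Fu T_mem_up by auto
      have "G = down_face x y \<or> G = down_face (x-1) y \<or> G = down_face x (y-1)" using FG(4) unfolding Fu adj_up .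
      moreover
      { assume G: "G = down_face x y"
        then have "x + y = d - 1" using FG(3)[unfolded G T_mem_down] h by auto
        then have yy: "y = d - 1 - x" by linarith
        have "e = ant x y" unfolding FG(1) Fu G ud1 ant_def by auto
        then have ee: "e = ant x (d - 1 - x)" using yy by simp
        have "x \<in> {c..d-b-1}" using h yy by simp
        then have "e \<in> S1" unfolding S1_def ee by (rule imageI) }
      moreover
      { assume G: "G = down_face (x-1) y"
        then have "x = 0" using FG(3)[unfolded G T_mem_down] h by auto
        moreover have "e = ver x y" unfolding FG(1) Fu G ud2 ver_def by auto
        ultimately have "e \<in> S2" unfolding S2_def using h by (auto intro!: image_eqI[of _ _ y]) }
      moreover
      { assume G: "G = down_face x (y-1)"
        then have "y = 0" using FG(3)[unfolded G T_mem_down] h by auto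
        moreover have "e = hor x y" unfolding FG(1) Fu G ud3 hor_def by auto
        ultimately have "e \<in> S3" unfolding S3_def using h by (auto intro!: image_eqI[of _ _ x]) }
      ultimately show ?thesis by blast
    next
      fix x y assume Fd: "F = down_face x y"
      have h: "0 \<le> x" "0 \<le> y" "x \<le> d - b - 1" "y \<le> d - c - 1" "a - 1 \<le> x + y" "x + y \<le> d - 2"
        using FG(2) unfolding Fd T_mem_down by auto
      have "G = up_face x y \<or> G = up_face (x+1) y \<or> G = up_face x (y+1)" using FG(4) unfolding Fd adj_down .
      moreover
      { assume G: "G = up_face x y"
        then have "x + y = a - 1" using FG(3)[unfolded G T_mem_up] h by auto
        then have yy: "y = a - 1 - x" by linarith
        have "e = ant x y" unfolding FG(1) Fd G du1 ..
        then have ee: "e = ant x (a - 1 - x)" using yy by simp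
        have "x \<in> {0..a-1}" using h yy by simp
        then have "e \<in> S4" unfolding S4_def ee by (rule imageI) }
      moreover
      { assume G: "G = up_face (x+1) y"
        then have "x = d - b - 1" using FG(3)[unfolded G T_mem_up] h by auto
        moreover have "e = ver (x+1) y" unfolding FG(1) Fd G du2 ..
        ultimately have "e \<in> S5" unfolding S5_def using h by (auto intro!: image_eqI[of _ _ y]) }
      moreover
      { assume G: "G = up_face x (y+1)"
        then have "y = d - c - 1" using FG(3)[unfolded G T_mem_up] h by auto
        moreover have "e = hor x (y+1)" unfolding FG(1) Fd G du3 ..
        ultimately have "e \<in> S6" unfolding S6_def using h by (auto intro!: image_eqI[of _ _ x]) }
      ultimately show ?thesis by blast
    qed
  qed
  have fin: "finite S1" "finite S2" "finite S3" "finite S4" "finite S5" "finite S6"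
    unfolding S1_def S2_def S3_def S4_def S5_def S6_def by simp_all
  have "card (Bd TT) \<le> card (S1 \<union> S2 \<union> S3 \<union> S4 \<union> S5 \<union> S6)" using sub fin by (intro card_mono) auto
  also have "\<dots> \<le> card S1 + card S2 + card S3 + card S4 + card S5 + card S6"
    by (meson add_mono card_Un_le le_refl order_trans)
  finally have "card (Bd TT) \<le> card S1 + card S2 + card S3 + card S4 + card S5 + card S6" .
  moreover have "card S1 \<le> nat (d - b - c)" "card S2 \<le> nat (d - c - a)" "card S3 \<le> nat (d - b - a)"
    "card S4 \<le> nat a" "card S5 \<le> nat b" "card S6 \<le> nat c"
    unfolding S1_def S2_def S3_def S4_def S5_def S6_def using card_img_le by (smt (verit))+
  ultimately show ?thesis unfolding ep_Bd using nn pw by linarith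
qed

end

lemma cong_perm_eq:
  assumes "d = d'" "(a',b',c') \<in> {(a,b,c),(b,c,a),(c,a,b),(a,c,b),(c,b,a),(b,a,c)}"
  shows "cong (T d a b c) (T d' a' b' c')"
  using assms cong_perm[of d a b c] by auto

lemma cong_dual_gen: "cong (T (2*d-a-b-c) (d-b-c) (d-a-c) (d-a-b)) X \<Longrightarrow> cong (T d a b c) X"
  by (rule cong_trans[OF cong_dua'])

lemma E_T: "E0 r = T (3*int r) (int r) (int r) (int r)" "EB1 r = T (3*int r) (int r - 1) (int r) (int r)"
  "EB2 r = T (3*int r + 1) (int r) (int r) (int r + 1)" "EB3 r = T (3*int r + 1) (int r) (int r) (int r)"
  "EB4 r = T (3*int r + 2) (int r) (int r + 1) (int r + 1)" "EB5 r = T (3*int r + 2) (int r) (int r) (int r + 1)"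
  unfolding E0_def EB1_def EB2_def EB3_def EB4_def EB5_def by simp_all

lemma cg_0_0: "cong (T (3*int r) (int r) (int r) (int r)) (E0 r)"
  unfolding E_T by (rule cong_perm_eq) auto

lemma cg_1_0: "cong (T (3*int r) (int r - 1) (int r) (int r)) (EB1 r)"
  unfolding E_T by (rule cong_perm_eq) auto

lemma cg_1_1: "cong (T (3*int r) (int r) (int r - 1) (int r)) (EB1 r)"
  unfolding E_T by (rule cong_perm_eq) auto

lemma cg_1_2: "cong (T (3*int r) (int r) (int r) (int r - 1)) (EB1 r)"
  unfolding E_T by (rule cong_perm_eq) auto

lemma cg_1_3: "cong (T (3*int r + 1) (int r) (int r + 1) (int r + 1)) (EB1 r)"
  unfolding E_T by (rule cong_dual_gen, rule cong_perm_eq) auto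

lemma cg_1_4: "cong (T (3*int r + 1) (int r + 1) (int r) (int r + 1)) (EB1 r)"
  unfolding E_T by (rule cong_dual_gen, rule cong_perm_eq) auto

lemma cg_1_5: "cong (T (3*int r + 1) (int r + 1) (int r + 1) (int r)) (EB1 r)"
  unfolding E_T by (rule cong_dual_gen, rule cong_perm_eq) auto

lemma cg_2_0: "cong (T (3*int r + 1) (int r) (int r) (int r + 1)) (EB2 r)"
  unfolding E_T by (rule cong_perm_eq) auto

lemma cg_2_1: "cong (T (3*int r + 1) (int r) (int r + 1) (int r)) (EB2 r)"
  unfolding E_T by (rule cong_perm_eq) auto

lemma cg_2_2: "cong (T (3*int r + 1) (int r + 1) (int r) (int r)) (EB2 r)"
  unfolding E_T by (rule cong_perm_eq) auto

lemma cg_3_0: "cong (T (3*int r + 1) (int r) (int r) (int r)) (EB3 r)"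
  unfolding E_T by (rule cong_perm_eq) auto

lemma cg_3_1: "cong (T (3*int r + 2) (int r + 1) (int r + 1) (int r + 1)) (EB3 r)"
  unfolding E_T by (rule cong_dual_gen, rule cong_perm_eq) auto

lemma cg_4_0: "cong (T (3*int r + 2) (int r) (int r + 1) (int r + 1)) (EB4 r)"
  unfolding E_T by (rule cong_perm_eq) auto

lemma cg_4_1: "cong (T (3*int r + 2) (int r + 1) (int r) (int r + 1)) (EB4 r)"
  unfolding E_T by (rule cong_perm_eq) auto

lemma cg_4_2: "cong (T (3*int r + 2) (int r + 1) (int r + 1) (int r)) (EB4 r)"
  unfolding E_T by (rule cong_perm_eq) auto

lemma cg_5_0: "cong (T (3*int r + 2) (int r) (int r) (int r + 1)) (EB5 r)"
  unfolding E_T by (rule cong_perm_eq) auto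

lemma cg_5_1: "cong (T (3*int r + 2) (int r) (int r + 1) (int r)) (EB5 r)"
  unfolding E_T by (rule cong_perm_eq) auto

lemma cg_5_2: "cong (T (3*int r + 2) (int r + 1) (int r) (int r)) (EB5 r)"
  unfolding E_T by (rule cong_perm_eq) auto

lemma cg_5_3: "cong (T (3*int r + 3) (int r + 1) (int r + 1) (int r + 2)) (EB5 r)"
  unfolding E_T by (rule cong_dual_gen, rule cong_perm_eq) auto

lemma cg_5_4: "cong (T (3*int r + 3) (int r + 1) (int r + 2) (int r + 1)) (EB5 r)"
  unfolding E_T by (rule cong_dual_gen, rule cong_perm_eq) auto

lemma cg_5_5: "cong (T (3*int r + 3) (int r + 2) (int r + 1) (int r + 1)) (EB5 r)"
  unfolding E_T by (rule cong_dual_gen, rule cong_perm_eq) auto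

lemma s_eq:
  fixes r m d a b c cm :: int
  assumes r1: "r \<ge> 1" and m: "0 \<le> m" "m \<le> 5" and nn: "0 \<le> a" "0 \<le> b" "0 \<le> c"
    and pw: "a + b \<le> d" "b + c \<le> d" "a + c \<le> d"
    and sle: "3*d - a - b - c \<le> 6*r + m"
    and ar: "6*r^2 + 2*m*r + cm \<le> d^2 - a^2 - b^2 - c^2" and cm: "cm = (if m > 0 then m - 2 else 0)"
  shows "3*d - a - b - c = 6*r + m"
proof (rule ccontr)
  assume ne: "3*d - a - b - c \<noteq> 6*r + m"
  have s0: "0 \<le> 3*d - a - b - c" using nn pw by linarith
  have "0 \<le> 3*(d - (a+b+c))^2 + 2*((a-b)^2 + (b-c)^2 + (c-a)^2)" by simp
  then have k: "6*(d^2 - a^2 - b^2 - c^2) \<le> (3*d - a - b - c)^2" using main_ineq[of d a b c] by linarith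
  have "3*d - a - b - c \<le> 6*r + m - 1" using sle ne by linarith
  then have "(3*d - a - b - c)^2 \<le> (6*r + m - 1)^2" using s0 power_mono by blast
  then have "6*(6*r^2 + 2*m*r + cm) \<le> (6*r + m - 1)^2" using k ar by (smt (verit))
  moreover have "(6*r + m - 1)^2 = 36*r^2 + 12*m*r - 12*r + (m-1)^2" by (simp add: power2_eq_square algebra_simps)
  ultimately have "12*r + 6*cm \<le> (m-1)^2" by (simp add: algebra_simps)
  moreover have "m = 0 \<or> m = 1 \<or> m = 2 \<or> m = 3 \<or> m = 4 \<or> m = 5" using m by arith
  ultimately show False using r1 cm by auto
qed

lemma area_id:
  fixes r d a b c :: int
  shows "d^2 - a^2 - b^2 - c^2 = 6*r^2 + 2*r*(3*(d-3*r) - ((a-r) + (b-r) + (c-r))) + ((d-3*r)^2 - (a-r)^2 - (b-r)^2 - (c-r)^2)"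
  by (simp add: power2_eq_square algebra_simps)

lemma classify:
  fixes r m :: nat and d a b c :: int
  assumes r1: "r \<ge> 1" and m: "m \<le> 5" and nn: "0 \<le> a" "0 \<le> b" "0 \<le> c"
    and pw: "a + b \<le> d" "b + c \<le> d" "a + c \<le> d"
    and sle: "3*d - a - b - c \<le> 6*int r + int m"
    and ar: "6*int r^2 + 2*int m*int r + (if m > 0 then int m - 2 else 0) \<le> d^2 - a^2 - b^2 - c^2"
  shows "d^2 - a^2 - b^2 - c^2 = 6*int r^2 + 2*int m*int r + (if m > 0 then int m - 2 else 0)
         \<and> (\<exists>H\<in>{E0 r, EB1 r, EB2 r, EB3 r, EB4 r, EB5 r}. cong (T d a b c) H)"
proof -
  have s: "3*d - a - b - c = 6*int r + int m"
    by (rule s_eq[OF _ _ _ nn pw sle ar]) (use r1 m in auto)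
  define \<delta> where "\<delta> = d - 3*int r"
  define x where "x = a - int r"
  define y where "y = b - int r"
  define z where "z = c - int r"
  have sx: "x + y + z = 3*\<delta> - int m" using s unfolding \<delta>_def x_def y_def z_def by simp
  have ai: "d^2 - a^2 - b^2 - c^2 = 6*int r^2 + 2*int r*int m + (\<delta>^2 - x^2 - y^2 - z^2)"
    using area_id[of d a b c "int r"] sx unfolding \<delta>_def x_def y_def z_def by simp
  have q: "\<delta>^2 - x^2 - y^2 - z^2 \<ge> (if m > 0 then int m - 2 else 0)" using ar ai by (simp add: algebra_simps)
  have dv: "d = 3*int r + \<delta>" "a = int r + x" "b = int r + y" "c = int r + z"
    unfolding \<delta>_def x_def y_def z_def by simp_all
  have "m = 0 \<or> m = 1 \<or> m = 2 \<or> m = 3 \<or> m = 4 \<or> m = 5" using m by arith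
  then show ?thesis
  proof (elim disjE)
    assume mm: "m = 0"
    have "x + y + z = 3*\<delta> - 0" "\<delta>^2 - x^2 - y^2 - z^2 \<ge> 0" using sx q mm by simp_all
    then have cs: "(\<delta> = 0 \<and> x = 0 \<and> y = 0 \<and> z = 0)" by (rule enum0)
    show ?thesis using cs
    proof (elim disjE conjE)
      assume h: "\<delta> = 0" "x = 0" "y = 0" "z = 0"
      have e: "d = 3*int r" "a = int r" "b = int r" "c = int r" using dv h by simp_all
      show ?thesis using cg_0_0 mm unfolding e by (simp add: power2_eq_square algebra_simps)
    qed
  next
    assume mm: "m = 1"
    have "x + y + z = 3*\<delta> - 1" "\<delta>^2 - x^2 - y^2 - z^2 \<ge> (-1)" using sx q mm by simp_all
    then have cs: "(\<delta> = 0 \<and> x = (-1) \<and> y = 0 \<and> z = 0) \<or> (\<delta> = 0 \<and> x = 0 \<and> y = (-1) \<and> z = 0) \<or> (\<delta> = 0 \<and> x = 0 \<and> y = 0 \<and> z = (-1)) \<or> (\<delta> = 1 \<and> x = 0 \<and> y = 1 \<and> z = 1) \<or> (\<delta> = 1 \<and> x = 1 \<and> y = 0 \<and> z = 1) \<or> (\<delta> = 1 \<and> x = 1 \<and> y = 1 \<and> z = 0)" by (rule enum1)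
    show ?thesis using cs
    proof (elim disjE conjE)
      assume h: "\<delta> = 0" "x = (-1)" "y = 0" "z = 0"
      have e: "d = 3*int r" "a = int r - 1" "b = int r" "c = int r" using dv h by simp_all
      show ?thesis using cg_1_0 mm unfolding e by (simp add: power2_eq_square algebra_simps)
    next
      assume h: "\<delta> = 0" "x = 0" "y = (-1)" "z = 0"
      have e: "d = 3*int r" "a = int r" "b = int r - 1" "c = int r" using dv h by simp_all
      show ?thesis using cg_1_1 mm unfolding e by (simp add: power2_eq_square algebra_simps)
    next
      assume h: "\<delta> = 0" "x = 0" "y = 0" "z = (-1)"
      have e: "d = 3*int r" "a = int r" "b = int r" "c = int r - 1" using dv h by simp_all
      show ?thesis using cg_1_2 mm unfolding e by (simp add: power2_eq_square algebra_simps)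
    next
      assume h: "\<delta> = 1" "x = 0" "y = 1" "z = 1"
      have e: "d = 3*int r + 1" "a = int r" "b = int r + 1" "c = int r + 1" using dv h by simp_all
      show ?thesis using cg_1_3 mm unfolding e by (simp add: power2_eq_square algebra_simps)
    next
      assume h: "\<delta> = 1" "x = 1" "y = 0" "z = 1"
      have e: "d = 3*int r + 1" "a = int r + 1" "b = int r" "c = int r + 1" using dv h by simp_all
      show ?thesis using cg_1_4 mm unfolding e by (simp add: power2_eq_square algebra_simps)
    next
      assume h: "\<delta> = 1" "x = 1" "y = 1" "z = 0"
      have e: "d = 3*int r + 1" "a = int r + 1" "b = int r + 1" "c = int r" using dv h by simp_all
      show ?thesis using cg_1_5 mm unfolding e by (simp add: power2_eq_square algebra_simps)
    qed
  next
    assume mm: "m = 2"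
    have "x + y + z = 3*\<delta> - 2" "\<delta>^2 - x^2 - y^2 - z^2 \<ge> 0" using sx q mm by simp_all
    then have cs: "(\<delta> = 1 \<and> x = 0 \<and> y = 0 \<and> z = 1) \<or> (\<delta> = 1 \<and> x = 0 \<and> y = 1 \<and> z = 0) \<or> (\<delta> = 1 \<and> x = 1 \<and> y = 0 \<and> z = 0)" by (rule enum2)
    show ?thesis using cs
    proof (elim disjE conjE)
      assume h: "\<delta> = 1" "x = 0" "y = 0" "z = 1"
      have e: "d = 3*int r + 1" "a = int r" "b = int r" "c = int r + 1" using dv h by simp_all
      show ?thesis using cg_2_0 mm unfolding e by (simp add: power2_eq_square algebra_simps)
    next
      assume h: "\<delta> = 1" "x = 0" "y = 1" "z = 0"
      have e: "d = 3*int r + 1" "a = int r" "b = int r + 1" "c = int r" using dv h by simp_all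
      show ?thesis using cg_2_1 mm unfolding e by (simp add: power2_eq_square algebra_simps)
    next
      assume h: "\<delta> = 1" "x = 1" "y = 0" "z = 0"
      have e: "d = 3*int r + 1" "a = int r + 1" "b = int r" "c = int r" using dv h by simp_all
      show ?thesis using cg_2_2 mm unfolding e by (simp add: power2_eq_square algebra_simps)
    qed
  next
    assume mm: "m = 3"
    have "x + y + z = 3*\<delta> - 3" "\<delta>^2 - x^2 - y^2 - z^2 \<ge> 1" using sx q mm by simp_all
    then have cs: "(\<delta> = 1 \<and> x = 0 \<and> y = 0 \<and> z = 0) \<or> (\<delta> = 2 \<and> x = 1 \<and> y = 1 \<and> z = 1)" by (rule enum3)
    show ?thesis using cs
    proof (elim disjE conjE)
      assume h: "\<delta> = 1" "x = 0" "y = 0" "z = 0"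
      have e: "d = 3*int r + 1" "a = int r" "b = int r" "c = int r" using dv h by simp_all
      show ?thesis using cg_3_0 mm unfolding e by (simp add: power2_eq_square algebra_simps)
    next
      assume h: "\<delta> = 2" "x = 1" "y = 1" "z = 1"
      have e: "d = 3*int r + 2" "a = int r + 1" "b = int r + 1" "c = int r + 1" using dv h by simp_all
      show ?thesis using cg_3_1 mm unfolding e by (simp add: power2_eq_square algebra_simps)
    qed
  next
    assume mm: "m = 4"
    have "x + y + z = 3*\<delta> - 4" "\<delta>^2 - x^2 - y^2 - z^2 \<ge> 2" using sx q mm by simp_all
    then have cs: "(\<delta> = 2 \<and> x = 0 \<and> y = 1 \<and> z = 1) \<or> (\<delta> = 2 \<and> x = 1 \<and> y = 0 \<and> z = 1) \<or> (\<delta> = 2 \<and> x = 1 \<and> y = 1 \<and> z = 0)" by (rule enum4)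
    show ?thesis using cs
    proof (elim disjE conjE)
      assume h: "\<delta> = 2" "x = 0" "y = 1" "z = 1"
      have e: "d = 3*int r + 2" "a = int r" "b = int r + 1" "c = int r + 1" using dv h by simp_all
      show ?thesis using cg_4_0 mm unfolding e by (simp add: power2_eq_square algebra_simps)
    next
      assume h: "\<delta> = 2" "x = 1" "y = 0" "z = 1"
      have e: "d = 3*int r + 2" "a = int r + 1" "b = int r" "c = int r + 1" using dv h by simp_all
      show ?thesis using cg_4_1 mm unfolding e by (simp add: power2_eq_square algebra_simps)
    next
      assume h: "\<delta> = 2" "x = 1" "y = 1" "z = 0"
      have e: "d = 3*int r + 2" "a = int r + 1" "b = int r + 1" "c = int r" using dv h by simp_all
      show ?thesis using cg_4_2 mm unfolding e by (simp add: power2_eq_square algebra_simps)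
    qed
  next
    assume mm: "m = 5"
    have "x + y + z = 3*\<delta> - 5" "\<delta>^2 - x^2 - y^2 - z^2 \<ge> 3" using sx q mm by simp_all
    then have cs: "(\<delta> = 2 \<and> x = 0 \<and> y = 0 \<and> z = 1) \<or> (\<delta> = 2 \<and> x = 0 \<and> y = 1 \<and> z = 0) \<or> (\<delta> = 2 \<and> x = 1 \<and> y = 0 \<and> z = 0) \<or> (\<delta> = 3 \<and> x = 1 \<and> y = 1 \<and> z = 2) \<or> (\<delta> = 3 \<and> x = 1 \<and> y = 2 \<and> z = 1) \<or> (\<delta> = 3 \<and> x = 2 \<and> y = 1 \<and> z = 1)" by (rule enum5)
    show ?thesis using cs
    proof (elim disjE conjE)
      assume h: "\<delta> = 2" "x = 0" "y = 0" "z = 1"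
      have e: "d = 3*int r + 2" "a = int r" "b = int r" "c = int r + 1" using dv h by simp_all
      show ?thesis using cg_5_0 mm unfolding e by (simp add: power2_eq_square algebra_simps)
    next
      assume h: "\<delta> = 2" "x = 0" "y = 1" "z = 0"
      have e: "d = 3*int r + 2" "a = int r" "b = int r + 1" "c = int r" using dv h by simp_all
      show ?thesis using cg_5_1 mm unfolding e by (simp add: power2_eq_square algebra_simps)
    next
      assume h: "\<delta> = 2" "x = 1" "y = 0" "z = 0"
      have e: "d = 3*int r + 2" "a = int r + 1" "b = int r" "c = int r" using dv h by simp_all
      show ?thesis using cg_5_2 mm unfolding e by (simp add: power2_eq_square algebra_simps)
    next
      assume h: "\<delta> = 3" "x = 1" "y = 1" "z = 2"
      have e: "d = 3*int r + 3" "a = int r + 1" "b = int r + 1" "c = int r + 2" using dv h by simp_all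
      show ?thesis using cg_5_3 mm unfolding e by (simp add: power2_eq_square algebra_simps)
    next
      assume h: "\<delta> = 3" "x = 1" "y = 2" "z = 1"
      have e: "d = 3*int r + 3" "a = int r + 1" "b = int r + 2" "c = int r + 1" using dv h by simp_all
      show ?thesis using cg_5_4 mm unfolding e by (simp add: power2_eq_square algebra_simps)
    next
      assume h: "\<delta> = 3" "x = 2" "y = 1" "z = 1"
      have e: "d = 3*int r + 3" "a = int r + 2" "b = int r + 1" "c = int r + 1" using dv h by simp_all
      show ?thesis using cg_5_5 mm unfolding e by (simp add: power2_eq_square algebra_simps)
    qed
  qed
qed

lemma good_poly:
  assumes "0 \<le> a" "0 \<le> b" "0 \<le> c" "a + b \<le> d" "b + c \<le> d" "a + c \<le> d" "a + b + c \<le> 2*d - 2"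
    and "a \<le> d - b - 1" "c \<le> d - 1"
  shows "polyiamond (T d a b c) \<and> int (card (T d a b c)) = d^2 - a^2 - b^2 - c^2
         \<and> int (edge_perimeter (T d a b c)) \<le> 3*d - a - b - c"
proof -
  interpret goodT d a b c by unfold_locales (use assms in auto)
  have cT: "int (card (T d a b c)) = d^2 - a^2 - b^2 - c^2" using card_T assms by blast
  have "up_face a 0 \<in> T d a b c" using assms unfolding T_mem_up by auto
  then have "T d a b c \<noteq> {}" by auto
  then show ?thesis using poly_T perim_T cT by blast
qed

lemma exQ:
  fixes r m :: nat
  assumes r1: "r \<ge> 1" and m: "m \<le> 5"
  shows "\<exists>Q. polyiamond Q \<and> int (card Q) = 6*int r^2 + 2*int m*int r + (if m > 0 then int m - 2 else 0)
         \<and> int (edge_perimeter Q) \<le> 6*int r + int m"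
proof -
  have "m = 0 \<or> m = 1 \<or> m = 2 \<or> m = 3 \<or> m = 4 \<or> m = 5" using m by arith
  then show ?thesis
  proof (elim disjE)
    assume mm: "m = 0"
    have "polyiamond (T (3*int r) (int r) (int r) (int r)) \<and> int (card (T (3*int r) (int r) (int r) (int r))) = (3*int r)^2 - (int r)^2 - (int r)^2 - (int r)^2
         \<and> int (edge_perimeter (T (3*int r) (int r) (int r) (int r))) \<le> 3*(3*int r) - int r - int r - int r"
      by (rule good_poly) (use r1 in auto)
    then show ?thesis using mm by (intro exI[of _ "T (3*int r) (int r) (int r) (int r)"]) (simp add: power2_eq_square algebra_simps)
  next
    assume mm: "m = 1"
    have "polyiamond (T (3*int r) (int r - 1) (int r) (int r)) \<and> int (card (T (3*int r) (int r - 1) (int r) (int r))) = (3*int r)^2 - (int r - 1)^2 - (int r)^2 - (int r)^2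
         \<and> int (edge_perimeter (T (3*int r) (int r - 1) (int r) (int r))) \<le> 3*(3*int r) - (int r - 1) - int r - int r"
      by (rule good_poly) (use r1 in auto)
    then show ?thesis using mm by (intro exI[of _ "T (3*int r) (int r - 1) (int r) (int r)"]) (simp add: power2_eq_square algebra_simps)
  next
    assume mm: "m = 2"
    have "polyiamond (T (3*int r + 1) (int r) (int r) (int r + 1)) \<and> int (card (T (3*int r + 1) (int r) (int r) (int r + 1))) = (3*int r + 1)^2 - (int r)^2 - (int r)^2 - (int r + 1)^2
         \<and> int (edge_perimeter (T (3*int r + 1) (int r) (int r) (int r + 1))) \<le> 3*(3*int r + 1) - int r - int r - (int r + 1)"
      by (rule good_poly) (use r1 in auto)
    then show ?thesis using mm by (intro exI[of _ "T (3*int r + 1) (int r) (int r) (int r + 1)"]) (simp add: power2_eq_square algebra_simps)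
  next
    assume mm: "m = 3"
    have "polyiamond (T (3*int r + 1) (int r) (int r) (int r)) \<and> int (card (T (3*int r + 1) (int r) (int r) (int r))) = (3*int r + 1)^2 - (int r)^2 - (int r)^2 - (int r)^2
         \<and> int (edge_perimeter (T (3*int r + 1) (int r) (int r) (int r))) \<le> 3*(3*int r + 1) - int r - int r - int r"
      by (rule good_poly) (use r1 in auto)
    then show ?thesis using mm by (intro exI[of _ "T (3*int r + 1) (int r) (int r) (int r)"]) (simp add: power2_eq_square algebra_simps)
  next
    assume mm: "m = 4"
    have "polyiamond (T (3*int r + 2) (int r) (int r + 1) (int r + 1)) \<and> int (card (T (3*int r + 2) (int r) (int r + 1) (int r + 1))) = (3*int r + 2)^2 - (int r)^2 - (int r + 1)^2 - (int r + 1)^2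
         \<and> int (edge_perimeter (T (3*int r + 2) (int r) (int r + 1) (int r + 1))) \<le> 3*(3*int r + 2) - int r - (int r + 1) - (int r + 1)"
      by (rule good_poly) (use r1 in auto)
    then show ?thesis using mm by (intro exI[of _ "T (3*int r + 2) (int r) (int r + 1) (int r + 1)"]) (simp add: power2_eq_square algebra_simps)
  next
    assume mm: "m = 5"
    have "polyiamond (T (3*int r + 2) (int r) (int r) (int r + 1)) \<and> int (card (T (3*int r + 2) (int r) (int r) (int r + 1))) = (3*int r + 2)^2 - (int r)^2 - (int r)^2 - (int r + 1)^2
         \<and> int (edge_perimeter (T (3*int r + 2) (int r) (int r) (int r + 1))) \<le> 3*(3*int r + 2) - int r - int r - (int r + 1)"
      by (rule good_poly) (use r1 in auto)
    then show ?thesis using mm by (intro exI[of _ "T (3*int r + 2) (int r) (int r) (int r + 1)"]) (simp add: power2_eq_square algebra_simps)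
  qed
qed

lemma shp_trn: "shp u v = trn u v" unfolding shp_def trn_def by simp

theorem lemma3p17:
  fixes r m :: nat and P :: "face set"
  assumes "r \<ge> 1" and "m \<le> 5"
    and "polyiamond P"
    and "int (area P) = 6 * int r ^ 2 + 2 * int m * int r + (if m > 0 then int m - 2 else 0)"
    and "\<forall>Q. polyiamond Q \<and> area Q = area P \<longrightarrow> edge_perimeter P \<le> edge_perimeter Q"
  shows "quasi_regular P"
proof -
  note r1 = assms(1) and m5 = assms(2) and P = assms(3) and AP = assms(4) and mini = assms(5)
  interpret hull P "Min (ci ` P)" "Max (ci ` P)" "Min (cj ` P)" "Max (cj ` P)" "Min (ck ` P)" "Max (ck ` P)"
    by unfold_locales (use P in auto)
  obtain Q where Q: "polyiamond Q" "int (card Q) = 6*int r^2 + 2*int m*int r + (if m > 0 then int m - 2 else 0)"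
    "int (edge_perimeter Q) \<le> 6*int r + int m" using exQ[OF r1 m5] by blast
  have "area Q = area P" using Q(2) AP unfolding area_def by simp
  then have "edge_perimeter P \<le> edge_perimeter Q" using mini Q(1) by blast
  then have pP: "int (edge_perimeter P) \<le> 6*int r + int m" using Q(3) by linarith
  have sle: "3*dd - aa - bb - cc \<le> 6*int r + int m" using perim_ge pP by linarith
  have are: "6*int r^2 + 2*int m*int r + (if m > 0 then int m - 2 else 0) \<le> dd^2 - aa^2 - bb^2 - cc^2"
    using card_le AP unfolding area_def by linarith
  have cl: "dd^2 - aa^2 - bb^2 - cc^2 = 6*int r^2 + 2*int m*int r + (if m > 0 then int m - 2 else 0)
         \<and> (\<exists>H\<in>{E0 r, EB1 r, EB2 r, EB3 r, EB4 r, EB5 r}. cong (T dd aa bb cc) H)"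
    by (rule classify[OF r1 m5 consts_ok sle are])
  then obtain H where H: "H \<in> {E0 r, EB1 r, EB2 r, EB3 r, EB4 r, EB5 r}" "cong (T dd aa bb cc) H" by blast
  define S where "S = (\<lambda>F. shp (Min (ci ` P)) (Min (cj ` P)) ` F) ` T dd aa bb cc"
  have finT: "finite (T dd aa bb cc)"
    by (metis T_split UT_decomp(1)[OF consts_ok] DT_decomp(1)[OF consts_ok] tri_finite triS_finite finite_Diff finite_Un finite_imageI)
  have sub: "P \<subseteq> S" unfolding S_def by (rule contain)
  have "card S \<le> card (T dd aa bb cc)" unfolding S_def by (rule card_image_le[OF finT])
  also have "int (card (T dd aa bb cc)) = dd^2 - aa^2 - bb^2 - cc^2" by (rule card_T[OF consts_ok])
  finally have "card S \<le> card P" using cl AP unfolding area_def by linarith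
  then have PS: "P = S" using sub finT unfolding S_def by (intro card_seteq) auto
  have "cong S (T dd aa bb cc)" unfolding S_def cong_def shp_trn using ls_trn by blast
  then have "cong S H" using H(2) by (rule cong_trans)
  then have "cong P H" using PS by simp
  then show ?thesis unfolding quasi_regular_def cong_def using H(1) r1 by blast
qed

end
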